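(* Let $G$ be a $2$-connected graph, $k\ge 0$ an integer, and $F\subseteq E(G)$ with $|F|\le k$ such that $T=G/F$ is a cactus; let $\mathcal{W}$ be the $T$-witness structure of $G$. Let $f:V(G)\to\{1,2,3\}$ be a random coloring in which each vertex receives a color independently and uniformly at random. Then $f$ is compatible with $\mathcal{W}$ with probability at least $1/3^{6k}$.
   Context: A cactus is a connected graph in which every edge lies in at most one cycle. For $F\subseteq E(G)$, $G/F$ is the graph whose vertices correspond to the parts of the partition of $V(G)$ into the vertex sets of connected components of $(V(F),F)$ and singletons $\{v\}$ for $v\notin V(F)$, two parts adjacent iff some edge of $G$ joins them; this partition is the $G/F$-witness structure $\mathcal{W}$, with $W(t)$ the part for $t\in V(G/F)$. A witness set is big if it has at least two vertices, singleton otherwise. A cable path in a graph $H$ is a path $(v_1,\dots,v_q)$ such that $N_H(v_i)=\{v_{i-1},v_{i+1}\}$ for each $2\le i\le q-1$. A coloring $f:V(G)\to\{1,2,3\}$ is compatible with $\mathcal{W}$ if: (1) every witness set is monochromatic; (2) for every edge $t_xt_y\in E(T)$ with $W(t_x),W(t_y)$ both big, $f(W(t_x))\ne f(W(t_y))$; (3) for every cable path $(t_x,t_1,\dots,t_q,t_y)$ in $T$ ($q\ge1$) with $W(t_x),W(t_y)$ big and all $W(t_i)$ singleton, $f(W(t_x))\neq f(W(t_1))$ and $f(W(t_y))\ne f(W(t_q))$. *)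

theory Defs
  imports "HOL-Probability.Probability"
begin

definition simple_graph :: "'v set \<Rightarrow> 'v set set \<Rightarrow> bool" where
  "simple_graph V E \<longleftrightarrow> finite V \<and> (\<forall>e\<in>E. \<exists>u v. e = {u, v} \<and> u \<noteq> v \<and> u \<in> V \<and> v \<in> V)"

definition adj_rel :: "'v set set \<Rightarrow> ('v \<times> 'v) set" where
  "adj_rel E = {(u, v). {u, v} \<in> E \<and> u \<noteq> v}"

definition connected_graph :: "'v set \<Rightarrow> 'v set set \<Rightarrow> bool" where
  "connected_graph V E \<longleftrightarrow> V \<noteq> {} \<and> (\<forall>u\<in>V. \<forall>v\<in>V. (u, v) \<in> (adj_rel E)\<^sup>*)"

definition delete_vertex :: "'v set \<Rightarrow> 'v set set \<Rightarrow> 'v \<Rightarrow> 'v set \<times> 'v set set" where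
  "delete_vertex V E v = (V - {v}, {e\<in>E. v \<notin> e})"

definition two_connected :: "'v set \<Rightarrow> 'v set set \<Rightarrow> bool" where
  "two_connected V E \<longleftrightarrow> card V \<ge> 3 \<and> connected_graph V E \<and>
     (\<forall>v\<in>V. connected_graph (V - {v}) {e\<in>E. v \<notin> e})"

definition cycle_edges :: "'v list \<Rightarrow> 'v set set" where
  "cycle_edges vs = {{vs ! i, vs ! ((i + 1) mod length vs)} | i. i < length vs}"

definition is_cycle :: "'v set \<Rightarrow> 'v set set \<Rightarrow> 'v set set \<Rightarrow> bool" where
  "is_cycle V E C \<longleftrightarrow> (\<exists>vs. distinct vs \<and> length vs \<ge> 3 \<and> set vs \<subseteq> V \<and>
       cycle_edges vs \<subseteq> E \<and> C = cycle_edges vs)"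

definition cactus :: "'v set \<Rightarrow> 'v set set \<Rightarrow> bool" where
  "cactus V E \<longleftrightarrow> connected_graph V E \<and>
     (\<forall>e\<in>E. \<forall>C1 C2. is_cycle V E C1 \<and> is_cycle V E C2 \<and> e \<in> C1 \<and> e \<in> C2 \<longrightarrow> C1 = C2)"

text \<open>Witness set of v in G/F: the vertex set of the connected component of (V(F),F)
  containing v if v \<in> V(F), and {v} otherwise (both are the F-reachability class of v).\<close>
definition witness_of :: "'v set set \<Rightarrow> 'v \<Rightarrow> 'v set" where
  "witness_of F v = {u. (v, u) \<in> (adj_rel F)\<^sup>*}"

text \<open>The G/F-witness structure (set of parts) = vertex set of the contracted graph.\<close>
definition witness_structure :: "'v set \<Rightarrow> 'v set set \<Rightarrow> 'v set set" where
  "witness_structure V F = witness_of F ` V"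

definition contract_edges :: "'v set \<Rightarrow> 'v set set \<Rightarrow> 'v set set \<Rightarrow> 'v set set set" where
  "contract_edges V E F = {{A, B} | A B. A \<in> witness_structure V F \<and> B \<in> witness_structure V F \<and>
       A \<noteq> B \<and> (\<exists>a\<in>A. \<exists>b\<in>B. {a, b} \<in> E)}"

definition nbhd :: "'t set set \<Rightarrow> 't \<Rightarrow> 't set" where
  "nbhd E x = {y. {x, y} \<in> E \<and> y \<noteq> x}"

definition is_path :: "'t set \<Rightarrow> 't set set \<Rightarrow> 't list \<Rightarrow> bool" where
  "is_path V E ps \<longleftrightarrow> ps \<noteq> [] \<and> distinct ps \<and> set ps \<subseteq> V \<and>
     (\<forall>i. i + 1 < length ps \<longrightarrow> {ps ! i, ps ! (i + 1)} \<in> E)"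

definition cable_path :: "'t set \<Rightarrow> 't set set \<Rightarrow> 't list \<Rightarrow> bool" where
  "cable_path V E ps \<longleftrightarrow> is_path V E ps \<and>
     (\<forall>i. 0 < i \<and> i + 1 < length ps \<longrightarrow> nbhd E (ps ! i) = {ps ! (i - 1), ps ! (i + 1)})"

definition compatible :: "'v set \<Rightarrow> 'v set set \<Rightarrow> 'v set set \<Rightarrow> ('v \<Rightarrow> nat) \<Rightarrow> bool" where
  "compatible V E F f \<longleftrightarrow>
     (let TV = witness_structure V F; TE = contract_edges V E F in
      (\<forall>W\<in>TV. \<forall>a\<in>W. \<forall>b\<in>W. f a = f b) \<and>
      (\<forall>A B. {A, B} \<in> TE \<and> A \<noteq> B \<and> card A \<ge> 2 \<and> card B \<ge> 2 \<longrightarrow>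
          (\<forall>a\<in>A. \<forall>b\<in>B. f a \<noteq> f b)) \<and>
      (\<forall>ps. cable_path TV TE ps \<and> length ps \<ge> 3 \<and> card (hd ps) \<ge> 2 \<and> card (last ps) \<ge> 2 \<and>
          (\<forall>i. 0 < i \<and> i + 1 < length ps \<longrightarrow> card (ps ! i) = 1) \<longrightarrow>
          (\<forall>a\<in>hd ps. \<forall>b\<in>ps ! 1. f a \<noteq> f b) \<and>
          (\<forall>a\<in>last ps. \<forall>b\<in>ps ! (length ps - 2). f a \<noteq> f b)))"

end

theory Submission
  imports Defs
begin



definition cactus_like :: "'v set \<Rightarrow> 'v set set \<Rightarrow> bool" where
  "cactus_like V E \<longleftrightarrow> (\<forall>e\<in>E. \<forall>C1 C2. is_cycle V E C1 \<and> is_cycle V E C2 \<and> e \<in> C1 \<and> e \<in> C2 \<longrightarrow> C1 = C2)"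

definition walk :: "'v set set \<Rightarrow> 'v list \<Rightarrow> bool" where
  "walk E ps \<longleftrightarrow> (\<forall>i. i + 1 < length ps \<longrightarrow> {ps!i, ps!(i+1)} \<in> E)"

lemma is_cycle_mono:
  assumes "is_cycle V' E' C" "V' \<subseteq> V" "E' \<subseteq> E" shows "is_cycle V E C"
proof -
  obtain vs where vs: "distinct vs" "length vs \<ge> 3" "set vs \<subseteq> V'" "cycle_edges vs \<subseteq> E'" "C = cycle_edges vs"
    using assms(1) unfolding is_cycle_def by blast
  show ?thesis unfolding is_cycle_def using vs assms(2,3) by (intro exI[of _ vs]) auto
qed

lemma is_cycle_sub: "is_cycle V E C \<Longrightarrow> C \<subseteq> E"
  unfolding is_cycle_def by auto

lemma cactus_like_mono:
  assumes "cactus_like V E" "V' \<subseteq> V" "E' \<subseteq> E" shows "cactus_like V' E'"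
  unfolding cactus_like_def
proof (intro ballI allI impI)
  fix e C1 C2 assume e: "e \<in> E'" and h: "is_cycle V' E' C1 \<and> is_cycle V' E' C2 \<and> e \<in> C1 \<and> e \<in> C2"
  have "is_cycle V E C1" "is_cycle V E C2" using is_cycle_mono[OF _ assms(2,3)] h by auto
  moreover have "e \<in> E" using e assms(3) by auto
  ultimately show "C1 = C2" using assms(1) h unfolding cactus_like_def by blast
qed

lemma cactus_like_disj:
  assumes "cactus_like V E" "is_cycle V E C1" "is_cycle V E C2" "C1 \<noteq> C2" shows "C1 \<inter> C2 = {}"
proof (rule ccontr)
  assume "C1 \<inter> C2 \<noteq> {}"
  then obtain e where e: "e \<in> C1" "e \<in> C2" by blast
  hence "e \<in> E" using is_cycle_sub[OF assms(2)] by blast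
  thus False using assms e unfolding cactus_like_def by blast
qed

lemma simple_graph_E_sub: "simple_graph V E \<Longrightarrow> E \<subseteq> Pow V"
  unfolding simple_graph_def by auto

lemma simple_graph_finE: "simple_graph V E \<Longrightarrow> finite E"
proof -
  assume a: "simple_graph V E"
  hence "finite (Pow V)" unfolding simple_graph_def by simp
  thus ?thesis using simple_graph_E_sub[OF a] by (rule finite_subset[rotated])
qed

lemma simple_graph_edge:
  assumes "simple_graph V E" "{x,y} \<in> E" shows "x \<noteq> y \<and> x \<in> V \<and> y \<in> V"
proof -
  obtain u v where uv: "{x,y} = {u,v}" "u \<noteq> v" "u \<in> V" "v \<in> V"
    using assms unfolding simple_graph_def by blast
  thus ?thesis by (auto simp: doubleton_eq_iff)
qed

lemma cyc_finite: "simple_graph V E \<Longrightarrow> finite {C. is_cycle V E C}"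
proof -
  assume "simple_graph V E"
  hence "finite (Pow E)" using simple_graph_finE by blast
  moreover have "{C. is_cycle V E C} \<subseteq> Pow E" using is_cycle_sub by blast
  ultimately show ?thesis by (rule finite_subset[rotated])
qed

lemma reach_path:
  assumes "(u, v) \<in> (adj_rel E)\<^sup>*"
  shows "\<exists>ps. ps \<noteq> [] \<and> hd ps = u \<and> last ps = v \<and> distinct ps \<and> walk E ps"
  using assms
proof (induction rule: rtrancl_induct)
  case base
  show ?case by (rule exI[of _ "[u]"]) (auto simp: walk_def)
next
  case (step y z)
  then obtain ps where ps: "ps \<noteq> []" "hd ps = u" "last ps = y" "distinct ps" "walk E ps" by blast
  from step.hyps(2) have yz: "{y,z} \<in> E" by (auto simp: adj_rel_def)
  show ?case
  proof (cases "z \<in> set ps")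
    case True
    then obtain j where j: "j < length ps" "ps!j = z" by (auto simp: in_set_conv_nth)
    let ?qs = "take (Suc j) ps"
    have "?qs \<noteq> []" using ps(1) by simp
    moreover have "hd ?qs = u" using ps by (simp add: hd_take)
    moreover have "last ?qs = z" using j by (simp add: take_Suc_conv_app_nth)
    moreover have "distinct ?qs" using ps by simp
    moreover have "walk E ?qs" using ps(5) by (auto simp: walk_def)
    ultimately show ?thesis by blast
  next
    case False
    let ?qs = "ps @ [z]"
    have "walk E ?qs" unfolding walk_def
    proof (intro allI impI)
      fix i assume i: "i + 1 < length ?qs"
      show "{?qs!i, ?qs!(i+1)} \<in> E"
      proof (cases "i + 1 < length ps")
        case True
        thus ?thesis using ps(5) by (simp add: walk_def nth_append)
      next
        case False
        hence "i = length ps - 1" using i by simp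
        moreover have "ps ! (length ps - 1) = y" using ps(1,3) by (simp add: last_conv_nth)
        ultimately show ?thesis using yz ps(1) by (simp add: nth_append)
      qed
    qed
    thus ?thesis using ps False by (intro exI[of _ ?qs]) auto
  qed
qed

lemma cycle_edges_sub: "e \<in> cycle_edges vs \<Longrightarrow> e \<subseteq> set vs"
proof -
  assume "e \<in> cycle_edges vs"
  then obtain i where i: "i < length vs" "e = {vs ! i, vs ! ((i + 1) mod length vs)}"
    unfolding cycle_edges_def by blast
  have "0 < length vs" using i by linarith
  hence "(i + 1) mod length vs < length vs" by simp
  thus ?thesis using i by auto
qed

lemma cycle_edges_ne: "length vs \<ge> 3 \<Longrightarrow> cycle_edges vs \<noteq> {}"
proof -
  assume a: "length vs \<ge> 3"
  have "{vs!0, vs!((0+1) mod length vs)} \<in> cycle_edges vs" unfolding cycle_edges_def using a by force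
  thus ?thesis by blast
qed

lemma cycle_edgeI: "i < length vs \<Longrightarrow> {vs!i, vs!((i+1) mod length vs)} \<in> cycle_edges vs"
  unfolding cycle_edges_def by blast

lemma dnth: "distinct vs \<Longrightarrow> i < length vs \<Longrightarrow> j < length vs \<Longrightarrow> i \<noteq> j \<Longrightarrow> vs!i \<noteq> vs!j"
  by (simp add: nth_eq_iff_index_eq)

lemma cycle_card3:
  assumes "distinct vs" "length vs \<ge> 3"
  shows "card (cycle_edges vs) \<ge> 3"
proof -
  let ?n = "length vs"
  have fin: "finite (cycle_edges vs)"
  proof -
    have "cycle_edges vs \<subseteq> Pow (set vs)" using cycle_edges_sub by blast
    thus ?thesis by (rule finite_subset) simp
  qed
  have e0: "{vs!0, vs!1} \<in> cycle_edges vs" unfolding cycle_edges_def using assms(2)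
    by (intro CollectI exI[of _ 0]) auto
  have "{vs!1, vs!((1+1) mod ?n)} \<in> cycle_edges vs" using assms(2) by (intro cycle_edgeI) simp
  moreover have "(1+1) mod ?n = (2::nat)" using assms(2) by simp
  ultimately have e1: "{vs!1, vs!2} \<in> cycle_edges vs" by (simp only:)
  have "{vs!2, vs!((2+1) mod ?n)} \<in> cycle_edges vs" using assms(2) by (intro cycle_edgeI) simp
  moreover have "(2+1) mod ?n = 3 mod ?n" by simp
  ultimately have e2: "{vs!2, vs!(3 mod ?n)} \<in> cycle_edges vs" by (simp only:)
  have d01: "vs!0 \<noteq> vs!1" using assms by (intro dnth) auto
  have d02: "vs!0 \<noteq> vs!2" using assms by (intro dnth) auto
  have d12: "vs!1 \<noteq> vs!2" using assms by (intro dnth) auto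
  have "0 < ?n" using assms by linarith
  hence "3 mod ?n < ?n" by simp
  moreover have "3 mod ?n \<noteq> 1"
  proof (cases "?n = 3")
    case True thus ?thesis by simp
  next
    case False hence "3 < ?n" using assms by simp
    thus ?thesis by simp
  qed
  ultimately have d13: "vs!1 \<noteq> vs!(3 mod ?n)" using assms by (intro dnth) auto
  define a where "a = vs!0"
  define b where "b = vs!1"
  define c where "c = vs!2"
  define d where "d = vs!(3 mod ?n)"
  have sub: "{{a, b}, {b, c}, {c, d}} \<subseteq> cycle_edges vs" using e0 e1 e2 unfolding a_def b_def c_def d_def by blast
  have n1: "{a,b} \<noteq> {b,c}"
  proof
    assume "{a,b} = {b,c}" hence "a \<in> {b,c}" by blast
    thus False using d01 d02 unfolding a_def b_def c_def by blast
  qed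
  have n2: "{a,b} \<noteq> {c,d}"
  proof
    assume "{a,b} = {c,d}" hence "b \<in> {c,d}" by blast
    thus False using d12 d13 unfolding d_def b_def c_def by blast
  qed
  have n3: "{b,c} \<noteq> {c,d}"
  proof
    assume "{b,c} = {c,d}" hence "b \<in> {c,d}" by blast
    thus False using d12 d13 unfolding d_def b_def c_def by blast
  qed
  have "card {{a, b}, {b, c}, {c, d}} = 3"
    using n1 n2 n3 by simp
  thus ?thesis using fin sub by (metis card_mono)
qed

lemma cycle_nbrs:
  assumes "distinct vs" "length vs \<ge> 3" "x \<in> set vs"
  shows "\<exists>y z. y \<noteq> z \<and> y \<noteq> x \<and> z \<noteq> x \<and> {x,y} \<in> cycle_edges vs \<and> {x,z} \<in> cycle_edges vs"
proof -
  let ?n = "length vs"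
  obtain i where i: "i < ?n" "vs!i = x" using assms(3) by (auto simp: in_set_conv_nth)
  let ?y = "vs ! ((i+1) mod ?n)"
  have ey: "{x, ?y} \<in> cycle_edges vs" using cycle_edgeI[OF i(1)] i(2) by simp
  have "i + 1 = ?n \<or> i + 1 < ?n" using i by auto
  hence modi: "(i+1) mod ?n = (if i+1 < ?n then i+1 else 0)" by auto
  have "0 < ?n" using i by linarith
  hence ylt: "(i+1) mod ?n < ?n" by simp
  have yi: "(i+1) mod ?n \<noteq> i" using assms(2) i modi by auto
  show ?thesis
  proof (cases "i = 0")
    case True
    let ?z = "vs ! (?n - 1)"
    have "{?z, vs ! ((?n - 1 + 1) mod ?n)} \<in> cycle_edges vs" using assms(2) by (intro cycle_edgeI) simp
    hence ez: "{x, ?z} \<in> cycle_edges vs" using True i assms(2) by (simp add: insert_commute)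
    have m1: "(i+1) mod ?n = 1" using True assms(2) by simp
    have "?y \<noteq> ?z" using m1 assms by (intro dnth) auto
    moreover have "?y \<noteq> vs!i" using assms ylt yi i by (intro dnth) auto
    moreover have "?z \<noteq> vs!0" using assms by (intro dnth) auto
    ultimately have "?y \<noteq> ?z" "?y \<noteq> x" "?z \<noteq> x" using i True by auto
    thus ?thesis using ey ez by blast
  next
    case False
    let ?z = "vs ! (i - 1)"
    have "{?z, vs ! ((i - 1 + 1) mod ?n)} \<in> cycle_edges vs" using i by (intro cycle_edgeI) simp
    hence ez: "{x, ?z} \<in> cycle_edges vs" using False i by (simp add: insert_commute)
    have "(i+1) mod ?n \<noteq> i - 1"
      using False i assms(2) modi by auto
    hence "?y \<noteq> ?z" using assms i ylt by (intro dnth) auto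
    moreover have "?y \<noteq> vs!i" using assms ylt yi i by (intro dnth) auto
    moreover have "?z \<noteq> vs!i" using assms i False by (intro dnth) auto
    ultimately show ?thesis using ey ez i by blast
  qed
qed




lemma reach_in_V:
  assumes "simple_graph V E" "u \<in> V" "(u, x) \<in> (adj_rel E)\<^sup>*" shows "x \<in> V"
  using assms(3)
proof (induction rule: rtrancl_induct)
  case base thus ?case using assms(2) .
next
  case (step y z)
  hence "{y,z} \<in> E" unfolding adj_rel_def by simp
  thus ?case using simple_graph_edge[OF assms(1)] by blast
qed

lemma is_cycle_ne: "is_cycle V E C \<Longrightarrow> C \<noteq> {}"
proof -
  assume "is_cycle V E C"
  then obtain vs where "length vs \<ge> 3" "C = cycle_edges vs" unfolding is_cycle_def by auto
  thus ?thesis using cycle_edges_ne by simp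
qed

lemma core:
  assumes "simple_graph V E" "V \<noteq> {}"
  shows "card E + 1 \<le> card V + card {C. is_cycle V E C}"
  using assms
proof (induction "card E" arbitrary: V E rule: less_induct)
  case less
  have finV: "finite V" using less.prems(1) unfolding simple_graph_def by simp
  show ?case
  proof (cases "E = {}")
    case True
    have "card V \<ge> 1" using less.prems(2) finV by (simp add: Suc_leI card_gt_0_iff)
    thus ?thesis using True by simp
  next
    case False
    then obtain e where eE: "e \<in> E" by blast
    then obtain u v where uv: "e = {u,v}" "u \<noteq> v" "u \<in> V" "v \<in> V"
      using less.prems(1) unfolding simple_graph_def by blast
    define E0 where "E0 = E - {e}"
    have finE: "finite E" using simple_graph_finE less.prems(1) by blast
    have "card E > 0" using eE finE card_gt_0_iff by blast
    hence cE0: "card E = card E0 + 1" unfolding E0_def using eE finE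
      by (simp add: card_Diff_singleton)
    have sg0: "simple_graph V E0" using less.prems(1) unfolding simple_graph_def E0_def by blast
    have cycmono: "{C. is_cycle V E0 C} \<subseteq> {C. is_cycle V E C}"
      using is_cycle_mono[of V E0 _ V E] unfolding E0_def by auto
    have finC: "finite {C. is_cycle V E C}" using cyc_finite less.prems(1) by blast
    have finC0: "finite {C. is_cycle V E0 C}" using cyc_finite sg0 by blast
    show ?thesis
    proof (cases "(u, v) \<in> (adj_rel E0)\<^sup>*")
      case True
      from reach_path[OF True] obtain ps where ps: "ps \<noteq> []" "hd ps = u" "last ps = v" "distinct ps" "walk E0 ps"
        by blast
      let ?n = "length ps"
      have p0: "ps!0 = u" using ps(1,2) by (simp add: hd_conv_nth)
      have pl: "ps!(?n - 1) = v" using ps(1,3) by (simp add: last_conv_nth)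
      have n2: "?n \<ge> 2"
      proof (rule ccontr)
        have "?n \<noteq> 0" using ps(1) by simp
        moreover assume "\<not> ?n \<ge> 2"
        ultimately have "?n = 1" by linarith
        thus False using p0 pl uv by simp
      qed
      have n3: "?n \<ge> 3"
      proof (rule ccontr)
        assume "\<not> ?n \<ge> 3" hence n: "?n = 2" using n2 by simp
        have "{ps!0, ps!(0+1)} \<in> E0" using ps(5) n unfolding walk_def by simp
        moreover have "ps!1 = v" using pl n by simp
        ultimately show False using uv p0 unfolding E0_def by simp
      qed
      have "?n - 1 + 1 = ?n" using n3 by simp
      hence wrap: "(?n - 1 + 1) mod ?n = 0" by (simp only: mod_self)
      have cyc_sub: "cycle_edges ps \<subseteq> E"
      proof
        fix x assume "x \<in> cycle_edges ps"
        then obtain i where i: "i < ?n" "x = {ps!i, ps!((i+1) mod ?n)}" unfolding cycle_edges_def by blast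
        show "x \<in> E"
        proof (cases "i + 1 < ?n")
          case True
          thus ?thesis using i ps(5) unfolding walk_def E0_def by auto
        next
          case False
          hence "i = ?n - 1" using i by simp
          hence "x = {v, u}" using i wrap p0 pl by simp
          thus ?thesis using uv eE by (simp add: insert_commute)
        qed
      qed
      have "{ps!(?n-1), ps!((?n - 1 + 1) mod ?n)} \<in> cycle_edges ps" using n3 by (intro cycle_edgeI) simp
      hence e_in: "e \<in> cycle_edges ps" using wrap p0 pl uv by (simp add: insert_commute)
      have setV: "set ps \<subseteq> V"
      proof
        fix x assume "x \<in> set ps"
        then obtain i where i: "i < ?n" "x = ps!i" by (auto simp: in_set_conv_nth)
        show "x \<in> V"
        proof (cases "i + 1 < ?n")
          case True
          hence "{ps!i, ps!(i+1)} \<in> E0" using ps(5) unfolding walk_def by simp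
          thus ?thesis using simple_graph_edge[OF sg0] i by blast
        next
          case False
          hence "i = ?n - 1" using i by simp
          thus ?thesis using pl i uv by simp
        qed
      qed
      have isc: "is_cycle V E (cycle_edges ps)" unfolding is_cycle_def
        using ps(4) n3 setV cyc_sub by (intro exI[of _ ps]) simp
      have notin: "\<not> is_cycle V E0 (cycle_edges ps)" using e_in is_cycle_sub unfolding E0_def by blast
      have "card {C. is_cycle V E0 C} + 1 \<le> card {C. is_cycle V E C}"
      proof -
        have "insert (cycle_edges ps) {C. is_cycle V E0 C} \<subseteq> {C. is_cycle V E C}" using isc cycmono by blast
        hence "card (insert (cycle_edges ps) {C. is_cycle V E0 C}) \<le> card {C. is_cycle V E C}"
          using finC card_mono by blast
        moreover have "card (insert (cycle_edges ps) {C. is_cycle V E0 C}) = card {C. is_cycle V E0 C} + 1"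
          using notin finC0 by simp
        ultimately show ?thesis by simp
      qed
      moreover have "card E0 + 1 \<le> card V + card {C. is_cycle V E0 C}"
        using less.hyps[of E0 V] cE0 sg0 less.prems(2) by simp
      ultimately show ?thesis using cE0 by simp
    next
      case False
      define X where "X = {x. (u, x) \<in> (adj_rel E0)\<^sup>*}"
      define Y where "Y = V - X"
      define EA where "EA = {e'\<in>E0. e' \<subseteq> X}"
      define EB where "EB = {e'\<in>E0. e' \<subseteq> Y}"
      have XV: "X \<subseteq> V" using reach_in_V[OF sg0 uv(3)] unfolding X_def by blast
      have uX: "u \<in> X" unfolding X_def by simp
      have vY: "v \<in> Y" using False uv(4) unfolding X_def Y_def by simp
      have closed: "\<And>a b. {a,b} \<in> E0 \<Longrightarrow> a \<in> X \<Longrightarrow> b \<in> X"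
      proof -
        fix a b assume ab: "{a,b} \<in> E0" "a \<in> X"
        have "a \<noteq> b" using simple_graph_edge[OF sg0 ab(1)] by simp
        hence "(a,b) \<in> adj_rel E0" using ab(1) unfolding adj_rel_def by simp
        moreover have "(u,a) \<in> (adj_rel E0)\<^sup>*" using ab(2) unfolding X_def by simp
        ultimately have "(u,b) \<in> (adj_rel E0)\<^sup>*" by (meson rtrancl_into_rtrancl)
        thus "b \<in> X" unfolding X_def by simp
      qed
      have E0split: "E0 = EA \<union> EB"
      proof
        show "EA \<union> EB \<subseteq> E0" unfolding EA_def EB_def by blast
        show "E0 \<subseteq> EA \<union> EB"
        proof
          fix e' assume e': "e' \<in> E0"
          then obtain a b where ab: "e' = {a,b}" "a \<in> V" "b \<in> V" using sg0 unfolding simple_graph_def by blast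
          show "e' \<in> EA \<union> EB"
          proof (cases "a \<in> X")
            case True
            hence "b \<in> X" using closed e' ab by blast
            thus ?thesis using True e' ab unfolding EA_def by auto
          next
            case False
            have "b \<notin> X"
            proof
              assume "b \<in> X"
              moreover have "{b,a} \<in> E0" using e' ab by (simp add: insert_commute)
              ultimately show False using closed False by blast
            qed
            thus ?thesis using False e' ab unfolding EB_def Y_def by auto
          qed
        qed
      qed
      have disjE: "EA \<inter> EB = {}"
      proof (rule ccontr)
        assume "EA \<inter> EB \<noteq> {}"
        then obtain e' where e': "e' \<in> E0" "e' \<subseteq> X" "e' \<subseteq> Y" unfolding EA_def EB_def by blast
        then obtain a b where "e' = {a,b}" using sg0 unfolding simple_graph_def by blast
        thus False using e' unfolding Y_def by blast
      qed
      have finE0: "finite E0" using finE unfolding E0_def by simp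
      have cardE0: "card E0 = card EA + card EB"
        using E0split disjE finE0 by (metis card_Un_disjoint finite_Un)
      have finX: "finite X" using XV finV finite_subset by blast
      have finY: "finite Y" using finV unfolding Y_def by simp
      have sgX: "simple_graph X EA" unfolding simple_graph_def
      proof (intro conjI ballI)
        show "finite X" using finX .
        fix e' assume e': "e' \<in> EA"
        then obtain a b where "e' = {a,b}" "a \<noteq> b" using sg0 unfolding EA_def simple_graph_def by blast
        thus "\<exists>a b. e' = {a, b} \<and> a \<noteq> b \<and> a \<in> X \<and> b \<in> X" using e' unfolding EA_def by blast
      qed
      have sgY: "simple_graph Y EB" unfolding simple_graph_def
      proof (intro conjI ballI)
        show "finite Y" using finY .
        fix e' assume e': "e' \<in> EB"
        then obtain a b where "e' = {a,b}" "a \<noteq> b" using sg0 unfolding EB_def simple_graph_def by blast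
        thus "\<exists>a b. e' = {a, b} \<and> a \<noteq> b \<and> a \<in> Y \<and> b \<in> Y" using e' unfolding EB_def by blast
      qed
      have "card EA \<le> card E0" using cardE0 by simp
      hence ltX: "card EA < card E" using cE0 by simp
      have "card EB \<le> card E0" using cardE0 by simp
      hence ltY: "card EB < card E" using cE0 by simp
      have IHX: "card EA + 1 \<le> card X + card {C. is_cycle X EA C}"
        using less.hyps[OF ltX sgX] uX by blast
      have IHY: "card EB + 1 \<le> card Y + card {C. is_cycle Y EB C}"
        using less.hyps[OF ltY sgY] vY by blast
      have EAE: "EA \<subseteq> E" unfolding EA_def E0_def by blast
      have EBE: "EB \<subseteq> E" unfolding EB_def E0_def by blast
      have YV: "Y \<subseteq> V" unfolding Y_def by blast
      have CX: "{C. is_cycle X EA C} \<subseteq> {C. is_cycle V E C}" using is_cycle_mono[OF _ XV EAE] by blast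
      have CY: "{C. is_cycle Y EB C} \<subseteq> {C. is_cycle V E C}" using is_cycle_mono[OF _ YV EBE] by blast
      have CXY: "{C. is_cycle X EA C} \<inter> {C. is_cycle Y EB C} = {}"
      proof (rule ccontr)
        assume "{C. is_cycle X EA C} \<inter> {C. is_cycle Y EB C} \<noteq> {}"
        then obtain C where C: "is_cycle X EA C" "is_cycle Y EB C" by blast
        hence "C \<subseteq> EA \<inter> EB" using is_cycle_sub by blast
        thus False using disjE is_cycle_ne[OF C(1)] by blast
      qed
      have "card ({C. is_cycle X EA C} \<union> {C. is_cycle Y EB C}) = card {C. is_cycle X EA C} + card {C. is_cycle Y EB C}"
        using CXY cyc_finite[OF sgX] cyc_finite[OF sgY] by (simp add: card_Un_disjoint)
      moreover have "card ({C. is_cycle X EA C} \<union> {C. is_cycle Y EB C}) \<le> card {C. is_cycle V E C}"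
        using CX CY finC by (simp add: card_mono)
      moreover have "card V = card X + card Y" unfolding Y_def using XV finV
        by (metis card_Diff_subset card_mono finite_subset le_add_diff_inverse)
      ultimately show ?thesis using IHX IHY cardE0 cE0 by linarith
    qed
  qed
qed




lemma pairs_small: "finite {(x,y). {x,y} = e} \<and> card {(x,y). {x,y} = e} \<le> 2"
proof (cases "\<exists>a b. e = {a,b}")
  case True
  then obtain a b where ab: "e = {a,b}" by blast
  have sub: "{(x,y). {x,y} = e} \<subseteq> {(a,b),(b,a)}"
  proof (rule subsetI)
    fix p assume p: "p \<in> {(x,y). {x,y} = e}"
    obtain x y where xy: "p = (x,y)" by (cases p)
    hence "{x,y} = {a,b}" using ab p by simp
    thus "p \<in> {(a,b),(b,a)}" using xy by (auto simp: doubleton_eq_iff)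
  qed
  have c2: "card {(a,b),(b,a)} \<le> 2" by (rule card_insert_le_m1) simp_all
  have f2: "finite {(a,b),(b,a)}" by simp
  have "card {(x,y). {x,y} = e} \<le> card {(a,b),(b,a)}" using card_mono[OF f2 sub] .
  moreover have "finite {(x,y). {x,y} = e}" using finite_subset[OF sub f2] .
  ultimately show ?thesis using c2 by linarith
next
  case False
  hence "{(x,y). {x,y} = e} = {}" by auto
  thus ?thesis by simp
qed

lemma dir_card: assumes "finite E" shows "finite {(x,y). {x,y} \<in> E} \<and> card {(x,y). {x,y} \<in> E} \<le> 2 * card E"
proof -
  have eq: "{(x,y). {x,y} \<in> E} = (\<Union>e\<in>E. {(x,y). {x,y} = e})" by auto
  have fin: "finite (\<Union>e\<in>E. {(x,y). {x,y} = e})" by (rule finite_UN_I[OF assms]) (simp add: pairs_small)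
  have "card (\<Union>e\<in>E. {(x,y). {x,y} = e}) \<le> (\<Sum>e\<in>E. card {(x,y). {x,y} = e})"
    using assms by (rule card_UN_le)
  also have "\<dots> \<le> (\<Sum>e\<in>E. 2)" by (intro sum_mono) (simp add: pairs_small)
  also have "\<dots> = 2 * card E" by simp
  finally show ?thesis using eq fin by simp
qed

lemma nbhd_sub: assumes "simple_graph V E" shows "nbhd E x \<subseteq> V"
proof
  fix y assume "y \<in> nbhd E x" hence "{x,y} \<in> E" unfolding nbhd_def by simp
  thus "y \<in> V" using simple_graph_edge[OF assms] by blast
qed

lemma deg_sum: assumes "simple_graph V E" shows "(\<Sum>x\<in>V. card (nbhd E x)) \<le> 2 * card E"
proof -
  have finV: "finite V" using assms unfolding simple_graph_def by simp
  have finN: "\<forall>x\<in>V. finite (nbhd E x)" using nbhd_sub[OF assms] finV finite_subset by blast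
  have "(\<Sum>x\<in>V. card (nbhd E x)) = card (Sigma V (nbhd E))" using finV finN by simp
  also have "\<dots> \<le> card {(x,y). {x,y} \<in> E}"
  proof (rule card_mono)
    show "finite {(x,y). {x,y} \<in> E}" using dir_card simple_graph_finE[OF assms] by blast
    show "Sigma V (nbhd E) \<subseteq> {(x,y). {x,y} \<in> E}" unfolding nbhd_def by auto
  qed
  also have "\<dots> \<le> 2 * card E" using dir_card simple_graph_finE[OF assms] by blast
  finally show ?thesis .
qed

lemma cycles_card: assumes "simple_graph V E" "cactus_like V E"
  shows "3 * card {C. is_cycle V E C} \<le> card E"
proof -
  let ?Cs = "{C. is_cycle V E C}"
  have fin: "finite ?Cs" using cyc_finite assms(1) by blast
  have finE: "finite E" using simple_graph_finE assms(1) by blast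
  have pw: "pairwise disjnt ?Cs" unfolding pairwise_def disjnt_def
  proof (intro ballI impI)
    fix C1 C2 assume "C1 \<in> ?Cs" "C2 \<in> ?Cs" "C1 \<noteq> C2"
    thus "C1 \<inter> C2 = {}" using cactus_like_disj[OF assms(2)] by simp
  qed
  have finA: "\<And>A. A \<in> ?Cs \<Longrightarrow> finite A"
  proof -
    fix A assume "A \<in> ?Cs" hence "A \<subseteq> E" using is_cycle_sub by simp
    thus "finite A" using finite_subset finE by auto
  qed
  have "card (\<Union>?Cs) = sum card ?Cs" using card_Union_disjoint[OF pw finA] by simp
  moreover have "\<Union>?Cs \<subseteq> E" using is_cycle_sub by auto
  hence "card (\<Union>?Cs) \<le> card E" using finE by (simp add: card_mono)
  moreover have "of_nat (card ?Cs) * 3 \<le> sum card ?Cs"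
  proof (rule sum_bounded_below)
    fix C assume "C \<in> ?Cs"
    then obtain vs where "distinct vs" "length vs \<ge> 3" "C = cycle_edges vs" unfolding is_cycle_def by auto
    thus "3 \<le> card C" using cycle_card3 by simp
  qed
  ultimately show ?thesis by simp
qed

lemma low_deg: assumes "simple_graph V E" "cactus_like V E" "V \<noteq> {}" shows "\<exists>x\<in>V. card (nbhd E x) \<le> 2"
proof (rule ccontr)
  assume nt: "\<not> ?thesis"
  have "\<And>x. x \<in> V \<Longrightarrow> 3 \<le> card (nbhd E x)"
  proof -
    fix x assume "x \<in> V"
    hence "\<not> card (nbhd E x) \<le> 2" using nt by blast
    thus "3 \<le> card (nbhd E x)" by linarith
  qed
  hence "of_nat (card V) * 3 \<le> (\<Sum>x\<in>V. card (nbhd E x))" by (rule sum_bounded_below)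
  hence a: "3 * card V \<le> 2 * card E" using deg_sum[OF assms(1)] by simp
  have b: "3 * card {C. is_cycle V E C} \<le> card E" using cycles_card[OF assms(1,2)] .
  have c: "card E + 1 \<le> card V + card {C. is_cycle V E C}" using core[OF assms(1,3)] .
  show False using a b c by linarith
qed

lemma three_col:
  assumes "simple_graph V E" "cactus_like V E"
  shows "\<exists>col. (\<forall>x\<in>V. col x \<in> {1,2,3::nat}) \<and> (\<forall>x y. {x,y} \<in> E \<longrightarrow> col x \<noteq> col y)"
  using assms
proof (induction "card V" arbitrary: V E rule: less_induct)
  case less
  show ?case
  proof (cases "V = {}")
    case True
    hence "E = {}" using less.prems(1) unfolding simple_graph_def by blast
    thus ?thesis by (intro exI[of _ "\<lambda>_. 1"]) (simp add: True)
  next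
    case False
    obtain x where x: "x \<in> V" "card (nbhd E x) \<le> 2" using low_deg[OF less.prems False] by blast
    define V0 where "V0 = V - {x}"
    define E0 where "E0 = {e\<in>E. x \<notin> e}"
    have finV: "finite V" using less.prems(1) unfolding simple_graph_def by simp
    have lt: "card V0 < card V" unfolding V0_def using card_Diff1_less[OF finV x(1)] .
    have sg0: "simple_graph V0 E0" unfolding simple_graph_def
    proof (intro conjI ballI)
      show "finite V0" using finV unfolding V0_def by simp
      fix e assume e: "e \<in> E0"
      then obtain u v where uv: "e = {u,v}" "u \<noteq> v" "u \<in> V" "v \<in> V"
        using less.prems(1) unfolding simple_graph_def E0_def by blast
      have "x \<notin> e" using e unfolding E0_def by simp
      thus "\<exists>u v. e = {u, v} \<and> u \<noteq> v \<and> u \<in> V0 \<and> v \<in> V0" using uv unfolding V0_def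
        by (intro exI[of _ u] exI[of _ v]) auto
    qed
    have cl0: "cactus_like V0 E0" by (rule cactus_like_mono[OF less.prems(2)]) (auto simp: V0_def E0_def)
    obtain col0 where col0: "\<forall>y\<in>V0. col0 y \<in> {1,2,3::nat}" "\<forall>y z. {y,z} \<in> E0 \<longrightarrow> col0 y \<noteq> col0 z"
      using less.hyps[OF lt sg0 cl0] by blast
    have finN: "finite (nbhd E x)" using nbhd_sub[OF less.prems(1)] finV finite_subset by blast
    have "card (col0 ` nbhd E x) \<le> 2" using card_image_le[OF finN, of col0] x(2) by linarith
    moreover have "{1,2,3::nat} \<subseteq> col0 ` nbhd E x \<Longrightarrow> 3 \<le> card (col0 ` nbhd E x)"
    proof -
      assume "{1,2,3::nat} \<subseteq> col0 ` nbhd E x"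
      hence "card {1,2,3::nat} \<le> card (col0 ` nbhd E x)" using finN by (intro card_mono) auto
      thus ?thesis by simp
    qed
    ultimately have "\<not> {1,2,3::nat} \<subseteq> col0 ` nbhd E x" by linarith
    then obtain c where c: "c \<in> {1,2,3::nat}" "c \<notin> col0 ` nbhd E x" by blast
    define col where "col = col0(x := c)"
    show ?thesis
    proof (intro exI[of _ col] conjI allI impI ballI)
      fix y assume "y \<in> V" thus "col y \<in> {1,2,3}" using col0(1) c(1) unfolding col_def V0_def by auto
    next
      fix y z assume yz: "{y,z} \<in> E"
      have ne: "y \<noteq> z" using simple_graph_edge[OF less.prems(1) yz] by simp
      show "col y \<noteq> col z"
      proof (cases "x \<in> {y,z}")
        case False
        hence "{y,z} \<in> E0" using yz unfolding E0_def by simp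
        thus ?thesis using col0(2) False unfolding col_def by auto
      next
        case True
        show ?thesis
        proof (cases "y = x")
          case True
          hence "z \<in> nbhd E x" using yz ne unfolding nbhd_def by simp
          thus ?thesis using True ne c(2) unfolding col_def by auto
        next
          case False
          hence zx: "z = x" using \<open>x \<in> {y,z}\<close> by simp
          hence "y \<in> nbhd E x" using yz ne unfolding nbhd_def by (simp add: insert_commute)
          thus ?thesis using zx ne c(2) unfolding col_def by auto
        qed
      qed
    qed
  qed
qed




lemma adj_sym: "(a,b) \<in> adj_rel F \<Longrightarrow> (b,a) \<in> adj_rel F"
  unfolding adj_rel_def by (auto simp: insert_commute)

lemma sym_adj: "sym (adj_rel F)"
  unfolding sym_def adj_rel_def by (auto simp: insert_commute)

lemma rt_sym: assumes "(a,b) \<in> (adj_rel F)\<^sup>*" shows "(b,a) \<in> (adj_rel F)\<^sup>*"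
proof -
  have "sym ((adj_rel F)\<^sup>*)" by (rule sym_rtrancl[OF sym_adj])
  thus ?thesis using assms by (rule symD)
qed

lemma wit_refl: "v \<in> witness_of F v" unfolding witness_of_def by simp

lemma wit_eq: assumes "u \<in> witness_of F v" shows "witness_of F u = witness_of F v"
proof -
  have vu: "(v,u) \<in> (adj_rel F)\<^sup>*" using assms unfolding witness_of_def by simp
  hence uv: "(u,v) \<in> (adj_rel F)\<^sup>*" by (rule rt_sym)
  show ?thesis unfolding witness_of_def
  proof (intro Collect_cong iffI)
    fix x assume "(u,x) \<in> (adj_rel F)\<^sup>*" thus "(v,x) \<in> (adj_rel F)\<^sup>*" by (rule rtrancl_trans[OF vu])
  next
    fix x assume "(v,x) \<in> (adj_rel F)\<^sup>*" thus "(u,x) \<in> (adj_rel F)\<^sup>*" by (rule rtrancl_trans[OF uv])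
  qed
qed

lemma wit_big:
  assumes "card (witness_of F v) \<ge> 2"
  shows "\<exists>x. {v,x} \<in> F \<and> x \<in> witness_of F v"
proof -
  have "\<exists>u\<in>witness_of F v. u \<noteq> v"
  proof (rule ccontr)
    assume "\<not> ?thesis"
    hence "witness_of F v \<subseteq> {v}" by blast
    hence "card (witness_of F v) \<le> card {v}" by (intro card_mono) simp_all
    thus False using assms by simp
  qed
  then obtain u where u: "u \<in> witness_of F v" "u \<noteq> v" by blast
  hence "(v,u) \<in> (adj_rel F)\<^sup>*" unfolding witness_of_def by simp
  hence "(v,u) \<in> (adj_rel F)\<^sup>+" using u(2) rtrancl_eq_or_trancl[of v u] by blast
  from tranclD[OF this] obtain x where x: "(v,x) \<in> adj_rel F" by blast
  hence "{v,x} \<in> F" unfolding adj_rel_def by simp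
  moreover have "x \<in> witness_of F v" using x unfolding witness_of_def by simp
  ultimately show ?thesis by blast
qed

definition pedges :: "'t list \<Rightarrow> 't set set" where
  "pedges P = {{P!i, P!(i+1)} | i. i + 1 < length P}"

lemma rev_pair:
  assumes "i + 1 < length P"
  shows "{rev P ! i, rev P ! (i+1)} = {P ! (length P - 2 - i), P ! (length P - 2 - i + 1)}"
proof -
  have "rev P ! i = P ! (length P - 2 - i + 1)" using assms by (simp add: rev_nth Suc_diff_Suc numeral_2_eq_2)
  moreover have "rev P ! (i+1) = P ! (length P - 2 - i)" using assms by (simp add: rev_nth numeral_2_eq_2)
  ultimately show ?thesis by (simp add: insert_commute)
qed

lemma pedges_rev: "pedges (rev P) = pedges P"
proof
  show "pedges (rev P) \<subseteq> pedges P"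
  proof
    fix x assume "x \<in> pedges (rev P)"
    then obtain i where i: "i + 1 < length P" "x = {rev P ! i, rev P ! (i+1)}" unfolding pedges_def by auto
    hence "x = {P ! (length P - 2 - i), P ! (length P - 2 - i + 1)}" using rev_pair by simp
    moreover have "length P - 2 - i + 1 < length P" using i by simp
    ultimately show "x \<in> pedges P" unfolding pedges_def by blast
  qed
next
  show "pedges P \<subseteq> pedges (rev P)"
  proof
    fix x assume "x \<in> pedges P"
    then obtain j where j: "j + 1 < length P" "x = {P ! j, P ! (j+1)}" unfolding pedges_def by auto
    define i where "i = length P - 2 - j"
    have i: "i + 1 < length P" "length P - 2 - i = j" using j unfolding i_def by auto
    hence "x = {rev P ! i, rev P ! (i+1)}" using rev_pair[OF i(1)] j by simp
    thus "x \<in> pedges (rev P)" unfolding pedges_def using i by auto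
  qed
qed




locale setting =
  fixes V :: "'v set" and E F :: "'v set set"
  assumes sg: "simple_graph V E" and FE: "F \<subseteq> E"
    and cac: "cactus (witness_structure V F) (contract_edges V E F)"
begin

abbreviation "TV \<equiv> witness_structure V F"
abbreviation "TE \<equiv> contract_edges V E F"

definition "Bg = {W \<in> TV. card W \<ge> 2}"
definition "BE = {e \<in> TE. e \<subseteq> Bg}"
definition "OP = {ps. cable_path TV TE ps \<and> length ps \<ge> 3 \<and> card (hd ps) \<ge> 2 \<and> card (last ps) \<ge> 2 \<and>
   (\<forall>i. 0 < i \<and> i + 1 < length ps \<longrightarrow> card (ps ! i) = 1)}"

lemma finV: "finite V" using sg unfolding simple_graph_def by simp

lemma finF: "finite F" using finite_subset[OF FE simple_graph_finE[OF sg]] .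

lemma sgF: "simple_graph V F"
  unfolding simple_graph_def
proof (intro conjI ballI)
  show "finite V" using finV .
  fix e assume "e \<in> F" hence "e \<in> E" using FE by auto
  thus "\<exists>u v. e = {u, v} \<and> u \<noteq> v \<and> u \<in> V \<and> v \<in> V" using sg unfolding simple_graph_def by simp
qed

lemma wit_sub: assumes "v \<in> V" shows "witness_of F v \<subseteq> V"
proof
  fix x assume "x \<in> witness_of F v"
  thus "x \<in> V" using reach_in_V[OF sgF assms, of x] unfolding witness_of_def by simp
qed

lemma TV_elem: assumes "W \<in> TV"
  shows "W \<subseteq> V" "finite W" "W \<noteq> {}" "\<And>a. a \<in> W \<Longrightarrow> witness_of F a = W"
proof -
  obtain w where w: "w \<in> V" "W = witness_of F w" using assms unfolding witness_structure_def by auto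
  show "W \<subseteq> V" using wit_sub[OF w(1)] w(2) by simp
  thus "finite W" using finV finite_subset by auto
  show "W \<noteq> {}" using wit_refl[of w F] w(2) by auto
  fix a assume "a \<in> W" thus "witness_of F a = W" using wit_eq[of a F w] w(2) by simp
qed

lemma finTV: "finite TV" unfolding witness_structure_def using finV by simp

lemma TE_D: assumes "e \<in> TE" obtains A B where "e = {A,B}" "A \<in> TV" "B \<in> TV" "A \<noteq> B"
  using assms unfolding contract_edges_def by blast

lemma sgT: "simple_graph TV TE"
  unfolding simple_graph_def
proof (intro conjI ballI)
  show "finite TV" using finTV .
  fix e assume "e \<in> TE"
  then obtain A B where "e = {A,B}" "A \<in> TV" "B \<in> TV" "A \<noteq> B" by (rule TE_D)
  thus "\<exists>u v. e = {u, v} \<and> u \<noteq> v \<and> u \<in> TV \<and> v \<in> TV" by (intro exI[of _ A] exI[of _ B]) simp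
qed

lemma clT: "cactus_like TV TE"
  using cac unfolding cactus_def cactus_like_def by (rule conjunct2)

lemma card_Bg: "card Bg \<le> card F"
proof -
  have "Bg \<subseteq> (\<lambda>e. witness_of F (SOME x. x \<in> e)) ` F"
  proof
    fix W assume W: "W \<in> Bg"
    then obtain w where w: "w \<in> V" "W = witness_of F w" unfolding Bg_def witness_structure_def by auto
    have "card (witness_of F w) \<ge> 2" using W w unfolding Bg_def by simp
    from wit_big[OF this] obtain x where x: "{w,x} \<in> F" "x \<in> witness_of F w" by blast
    have "(SOME y. y \<in> {w,x}) \<in> {w,x}" by (rule someI[of _ w]) simp
    hence "(SOME y. y \<in> {w,x}) \<in> witness_of F w" using x(2) wit_refl[of w F] by auto
    hence "witness_of F (SOME y. y \<in> {w,x}) = W" using wit_eq w(2) by simp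
    thus "W \<in> (\<lambda>e. witness_of F (SOME x. x \<in> e)) ` F" using x(1) by (intro image_eqI[of _ _ "{w,x}"]) auto
  qed
  hence "card Bg \<le> card ((\<lambda>e. witness_of F (SOME x. x \<in> e)) ` F)" using finF by (intro card_mono) auto
  also have "\<dots> \<le> card F" using finF by (rule card_image_le)
  finally show ?thesis .
qed

lemma card_UBg: "card (\<Union>Bg) \<le> 2 * card F"
proof -
  have sub: "\<Union>Bg \<subseteq> \<Union>F"
  proof
    fix v assume "v \<in> \<Union>Bg"
    then obtain W where W: "W \<in> Bg" "v \<in> W" by blast
    hence "witness_of F v = W" using TV_elem(4) unfolding Bg_def by blast
    hence "card (witness_of F v) \<ge> 2" using W unfolding Bg_def by simp
    from wit_big[OF this] obtain x where "{v,x} \<in> F" by blast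
    thus "v \<in> \<Union>F" by blast
  qed
  have c2: "\<And>e. e \<in> F \<Longrightarrow> card e = 2"
  proof -
    fix e assume "e \<in> F"
    then obtain u v where "e = {u,v}" "u \<noteq> v" using sgF unfolding simple_graph_def by blast
    thus "card e = 2" by simp
  qed
  have finU: "finite (\<Union>F)"
  proof (rule finite_Union[OF finF])
    fix e assume "e \<in> F" hence "card e = 2" by (rule c2)
    thus "finite e" using card.infinite by fastforce
  qed
  have "card (\<Union>Bg) \<le> card (\<Union>F)" using card_mono[OF finU sub] .
  also have "\<dots> \<le> sum card F" by (rule card_Union_le_sum_card)
  also have "\<dots> = sum (\<lambda>_. 2) F" using c2 by (intro sum.cong) auto
  also have "\<dots> = 2 * card F" by simp
  finally show ?thesis .
qed

lemma OP_D:
  assumes "P \<in> OP"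
  shows "distinct P" "set P \<subseteq> TV" "length P \<ge> 3"
    "\<And>i. i+1 < length P \<Longrightarrow> {P!i, P!(i+1)} \<in> TE"
    "\<And>i. 0 < i \<Longrightarrow> i+1 < length P \<Longrightarrow> nbhd TE (P!i) = {P!(i-1), P!(i+1)}"
    "card (P!0) \<ge> 2" "card (P!(length P - 1)) \<ge> 2"
    "\<And>i. 0 < i \<Longrightarrow> i+1 < length P \<Longrightarrow> card (P!i) = 1"
proof -
  have ne: "P \<noteq> []" using assms unfolding OP_def cable_path_def is_path_def by simp
  show "distinct P" "set P \<subseteq> TV" "length P \<ge> 3"
    using assms unfolding OP_def cable_path_def is_path_def by simp_all
  show "\<And>i. i+1 < length P \<Longrightarrow> {P!i, P!(i+1)} \<in> TE"
    using assms unfolding OP_def cable_path_def is_path_def by simp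
  show "\<And>i. 0 < i \<Longrightarrow> i+1 < length P \<Longrightarrow> nbhd TE (P!i) = {P!(i-1), P!(i+1)}"
    using assms unfolding OP_def cable_path_def by simp
  show "card (P!0) \<ge> 2" "card (P!(length P - 1)) \<ge> 2"
    using assms ne unfolding OP_def by (simp_all add: hd_conv_nth last_conv_nth)
  show "\<And>i. 0 < i \<Longrightarrow> i+1 < length P \<Longrightarrow> card (P!i) = 1"
    using assms unfolding OP_def by simp
qed

lemma finOP: "finite OP"
proof -
  have "OP \<subseteq> {xs. set xs \<subseteq> TV \<and> distinct xs}" using OP_D(1,2) by blast
  thus ?thesis using finite_subset_distinct[OF finTV] finite_subset by auto
qed

end


context setting begin

lemma OP_rev: assumes "P \<in> OP" shows "rev P \<in> OP"
proof -
  let ?n = "length P"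
  note D = OP_D[OF assms]
  have ne: "P \<noteq> []" using D(3) by auto
  have edges: "\<forall>i. i + 1 < length (rev P) \<longrightarrow> {rev P ! i, rev P ! (i+1)} \<in> TE"
  proof (intro allI impI)
    fix i assume i: "i + 1 < length (rev P)"
    hence i': "i + 1 < ?n" by simp
    have "?n - 2 - i + 1 < ?n" using i' by simp
    hence "{P ! (?n - 2 - i), P ! (?n - 2 - i + 1)} \<in> TE" by (rule D(4))
    thus "{rev P ! i, rev P ! (i+1)} \<in> TE" using rev_pair[OF i'] by simp
  qed
  have idx: "\<And>i. 0 < i \<Longrightarrow> i + 1 < ?n \<Longrightarrow> rev P ! i = P ! (?n - 1 - i) \<and> rev P ! (i-1) = P ! (?n - 1 - i + 1)
        \<and> rev P ! (i+1) = P ! (?n - 1 - i - 1) \<and> 0 < ?n - 1 - i \<and> ?n - 1 - i + 1 < ?n"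
  proof -
    fix i assume i: "0 < i" "i + 1 < ?n"
    have a: "rev P ! i = P ! (?n - 1 - i)" using i by (simp add: rev_nth)
    have "?n - Suc (i - 1) = ?n - 1 - i + 1" using i by simp
    hence b: "rev P ! (i-1) = P ! (?n - 1 - i + 1)" using i by (simp add: rev_nth)
    have "?n - Suc (i + 1) = ?n - 1 - i - 1" using i by simp
    hence c: "rev P ! (i+1) = P ! (?n - 1 - i - 1)" using i by (simp add: rev_nth)
    show "rev P ! i = P ! (?n - 1 - i) \<and> rev P ! (i-1) = P ! (?n - 1 - i + 1)
        \<and> rev P ! (i+1) = P ! (?n - 1 - i - 1) \<and> 0 < ?n - 1 - i \<and> ?n - 1 - i + 1 < ?n"
      using a b c i by simp
  qed
  have nb: "\<forall>i. 0 < i \<and> i + 1 < length (rev P) \<longrightarrow> nbhd TE (rev P ! i) = {rev P ! (i - 1), rev P ! (i + 1)}"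
  proof (intro allI impI)
    fix i assume i: "0 < i \<and> i + 1 < length (rev P)"
    hence ii: "0 < i" "i + 1 < ?n" by simp_all
    note X = idx[OF ii]
    have "nbhd TE (P ! (?n - 1 - i)) = {P ! (?n - 1 - i - 1), P ! (?n - 1 - i + 1)}"
      using D(5)[of "?n - 1 - i"] X by simp
    thus "nbhd TE (rev P ! i) = {rev P ! (i - 1), rev P ! (i + 1)}" using X by (simp add: insert_commute)
  qed
  have cards: "\<forall>i. 0 < i \<and> i + 1 < length (rev P) \<longrightarrow> card (rev P ! i) = 1"
  proof (intro allI impI)
    fix i assume i: "0 < i \<and> i + 1 < length (rev P)"
    hence ii: "0 < i" "i + 1 < ?n" by simp_all
    note X = idx[OF ii]
    show "card (rev P ! i) = 1" using D(8)[of "?n - 1 - i"] X by simp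
  qed
  have hd: "hd (rev P) = P ! (?n - 1)" using ne by (simp add: hd_rev last_conv_nth)
  have lst: "last (rev P) = P ! 0" using ne by (simp add: last_rev hd_conv_nth)
  have "cable_path TV TE (rev P)" unfolding cable_path_def is_path_def
    using D(1,2) edges nb ne by simp
  thus ?thesis unfolding OP_def using D(3,6,7) cards hd lst by simp
qed

lemma OP_unique:
  assumes P: "P \<in> OP" and Q: "Q \<in> OP" and h0: "P!0 = Q!0" and h1: "P!1 = Q!1"
  shows "P = Q"
proof -
  note DP = OP_D[OF P] and DQ = OP_D[OF Q]
  have agree: "\<And>i. i < length P \<Longrightarrow> i < length Q \<Longrightarrow> P!i = Q!i"
  proof -
    fix i show "i < length P \<Longrightarrow> i < length Q \<Longrightarrow> P!i = Q!i"
    proof (induction i rule: less_induct)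
      case (less i)
      show ?case
      proof (cases i)
        case 0 thus ?thesis using h0 by simp
      next
        case (Suc i1)
        show ?thesis
        proof (cases i1)
          case 0 thus ?thesis using h1 Suc by simp
        next
          case (Suc m)
          have im: "i = m + 2" using Suc \<open>i = Suc i1\<close> by simp
          have e1: "P!(m+1) = Q!(m+1)" using less.IH[of "m+1"] less.prems im by simp
          have e0: "P!m = Q!m" using less.IH[of m] less.prems im by simp
          have "nbhd TE (P!(m+1)) = {P!m, P!(m+2)}" using DP(5)[of "m+1"] less.prems im by simp
          moreover have "nbhd TE (Q!(m+1)) = {Q!m, Q!(m+2)}" using DQ(5)[of "m+1"] less.prems im by simp
          ultimately have eq: "{P!m, P!(m+2)} = {P!m, Q!(m+2)}" using e0 e1 by simp
          have "P!m \<noteq> P!(m+2)" using DP(1) less.prems im by (intro dnth) auto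
          hence "P!(m+2) = Q!(m+2)" using eq by (auto simp: doubleton_eq_iff)
          thus ?thesis using im by simp
        qed
      qed
    qed
  qed
  have len: "length P = length Q"
  proof (rule ccontr)
    assume "length P \<noteq> length Q"
    hence "length P < length Q \<or> length Q < length P" by linarith
    thus False
    proof
      assume lt: "length P < length Q"
      let ?m = "length P - 1"
      have "P!?m = Q!?m" using agree lt DP(3) by simp
      moreover have "card (Q!?m) = 1" using DQ(8)[of ?m] lt DP(3) by simp
      ultimately show False using DP(7) by simp
    next
      assume lt: "length Q < length P"
      let ?m = "length Q - 1"
      have "P!?m = Q!?m" using agree lt DQ(3) by simp
      moreover have "card (P!?m) = 1" using DP(8)[of ?m] lt DQ(3) by simp
      ultimately show False using DQ(7) by simp
    qed
  qed
  show ?thesis using len agree by (intro nth_equalityI) simp_all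
qed

end


context setting begin

definition "IV = {P!i | P i. P \<in> OP \<and> 0 < i \<and> i + 1 < length P}"
definition "VT = Bg \<union> IV"
definition "ET = \<Union>(pedges ` OP)"

lemma pedgeI: "i + 1 < length P \<Longrightarrow> {P!i, P!(i+1)} \<in> pedges P"
  unfolding pedges_def by blast

lemma IV_card: "x \<in> IV \<Longrightarrow> card x = 1"
  unfolding IV_def using OP_D(8) by blast

lemma Bg_TV: "Bg \<subseteq> TV" unfolding Bg_def by blast

lemma IV_TV: "IV \<subseteq> TV"
proof
  fix x assume "x \<in> IV"
  then obtain P i where P: "P \<in> OP" "i + 1 < length P" "x = P!i" unfolding IV_def by blast
  hence "P!i \<in> set P" by simp
  thus "x \<in> TV" using OP_D(2)[OF P(1)] P(3) by blast
qed

lemma VT_TV: "VT \<subseteq> TV" unfolding VT_def using Bg_TV IV_TV by blast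

lemma OP_vert: assumes "P \<in> OP" "j < length P" shows "P!j \<in> VT"
proof -
  note D = OP_D[OF assms(1)]
  have inTV: "P!j \<in> TV" using D(2) assms(2) nth_mem by blast
  show ?thesis
  proof (cases "j = 0")
    case True thus ?thesis using D(6) inTV unfolding VT_def Bg_def by simp
  next
    case False
    show ?thesis
    proof (cases "j = length P - 1")
      case True thus ?thesis using D(7) inTV unfolding VT_def Bg_def by simp
    next
      case False2: False
      hence "j + 1 < length P" using assms(2) by simp
      hence "P!j \<in> IV" unfolding IV_def using False assms(1) by blast
      thus ?thesis unfolding VT_def by simp
    qed
  qed
qed

lemma ET_TE: "ET \<subseteq> TE"
proof
  fix e assume "e \<in> ET"
  then obtain P i where "P \<in> OP" "i + 1 < length P" "e = {P!i, P!(i+1)}" unfolding ET_def pedges_def by blast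
  thus "e \<in> TE" using OP_D(4) by simp
qed

lemma ET_D: assumes "e \<in> ET" obtains P i where "P \<in> OP" "i + 1 < length P" "e = {P!i, P!(i+1)}"
  using assms unfolding ET_def pedges_def by blast

lemma sgVT: "simple_graph VT ET"
  unfolding simple_graph_def
proof (intro conjI ballI)
  show "finite VT" using finite_subset[OF VT_TV finTV] .
  fix e assume "e \<in> ET"
  then obtain P i where P: "P \<in> OP" "i + 1 < length P" "e = {P!i, P!(i+1)}" by (rule ET_D)
  have "P!i \<noteq> P!(i+1)" using OP_D(1)[OF P(1)] P(2) by (intro dnth) auto
  moreover have "P!i \<in> VT" "P!(i+1) \<in> VT" using OP_vert[OF P(1)] P(2) by simp_all
  ultimately show "\<exists>u v. e = {u, v} \<and> u \<noteq> v \<and> u \<in> VT \<and> v \<in> VT" using P(3)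
    by (intro exI[of _ "P!i"] exI[of _ "P!(i+1)"]) simp
qed

lemma clVT: "cactus_like VT ET" using cactus_like_mono[OF clT VT_TV ET_TE] .

lemma finET: "finite ET" using simple_graph_finE[OF sgVT] .

lemma card_VT: "card VT \<le> card Bg + card IV" unfolding VT_def by (rule card_Un_le)

lemma finIV: "finite IV" using finite_subset[OF IV_TV finTV] .

lemma count_dir: "2 * card IV + card OP \<le> 2 * card ET"
proof -
  define D where "D = {(x,y). {x,y} \<in> ET}"
  define A1 where "A1 = Sigma IV (\<lambda>x. {y. {x,y} \<in> ET})"
  define A2 where "A2 = (\<lambda>P. (P!0, P!1)) ` OP"
  have finD: "finite D" and cD: "card D \<le> 2 * card ET" using dir_card[OF finET] unfolding D_def by simp_all
  have A1D: "A1 \<subseteq> D" unfolding A1_def D_def by auto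
  have A2D: "A2 \<subseteq> D"
  proof
    fix p assume "p \<in> A2"
    then obtain P where P: "P \<in> OP" "p = (P!0, P!1)" unfolding A2_def by blast
    have "{P!0, P!(0+1)} \<in> pedges P" using OP_D(3)[OF P(1)] by (intro pedgeI) simp
    hence "{P!0, P!1} \<in> ET" unfolding ET_def using P(1) by auto
    thus "p \<in> D" unfolding D_def using P(2) by simp
  qed
  have disj: "A1 \<inter> A2 = {}"
  proof (rule ccontr)
    assume "A1 \<inter> A2 \<noteq> {}"
    then obtain P where P: "P \<in> OP" "P!0 \<in> IV" unfolding A1_def A2_def by auto
    thus False using IV_card[OF P(2)] OP_D(6)[OF P(1)] by simp
  qed
  have finN: "\<forall>x\<in>IV. finite {y. {x,y} \<in> ET}"
  proof
    fix x assume "x \<in> IV"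
    have "{y. {x,y} \<in> ET} \<subseteq> VT" using simple_graph_edge[OF sgVT] by blast
    thus "finite {y. {x,y} \<in> ET}" using finite_subset[OF VT_TV finTV] finite_subset by blast
  qed
  have cA1: "card A1 = (\<Sum>x\<in>IV. card {y. {x,y} \<in> ET})" unfolding A1_def using finIV finN by simp
  have "of_nat (card IV) * 2 \<le> (\<Sum>x\<in>IV. card {y. {x,y} \<in> ET})"
  proof (rule sum_bounded_below)
    fix x assume "x \<in> IV"
    then obtain P i where P: "P \<in> OP" "0 < i" "i + 1 < length P" "x = P!i" unfolding IV_def by blast
    have "{P!(i-1), P!(i-1+1)} \<in> pedges P" using P by (intro pedgeI) simp
    hence e1: "{x, P!(i-1)} \<in> ET" unfolding ET_def using P by (auto simp: insert_commute)
    have "{P!i, P!(i+1)} \<in> pedges P" using P by (intro pedgeI) simp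
    hence e2: "{x, P!(i+1)} \<in> ET" unfolding ET_def using P by auto
    have ne: "P!(i-1) \<noteq> P!(i+1)" using OP_D(1)[OF P(1)] P by (intro dnth) auto
    have "{P!(i-1), P!(i+1)} \<subseteq> {y. {x,y} \<in> ET}" using e1 e2 by simp
    hence "card {P!(i-1), P!(i+1)} \<le> card {y. {x,y} \<in> ET}" using finN \<open>x \<in> IV\<close> by (intro card_mono) auto
    thus "2 \<le> card {y. {x,y} \<in> ET}" using ne by simp
  qed
  hence c1: "2 * card IV \<le> card A1" using cA1 by simp
  have inj: "inj_on (\<lambda>P. (P!0, P!1)) OP"
    by (rule inj_onI) (use OP_unique in auto)
  have c2: "card A2 = card OP" unfolding A2_def using card_image[OF inj] .
  have finA: "finite A1" "finite A2" using A1D A2D finD finite_subset by auto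
  have "card A1 + card A2 = card (A1 \<union> A2)" using card_Un_disjoint[OF finA disj] by simp
  also have "\<dots> \<le> card D" using A1D A2D finD by (intro card_mono) auto
  finally show ?thesis using c1 c2 cD by linarith
qed

end


context setting begin

lemma cyc_walk:
  assumes cy: "is_cycle VT ET Cy" and P: "P \<in> OP" and j: "j + 1 < length P" and ej: "{P!j, P!(j+1)} \<in> Cy"
  shows "pedges P \<subseteq> Cy"
proof -
  obtain vs where vs: "distinct vs" "length vs \<ge> 3" "Cy = cycle_edges vs"
    using cy unfolding is_cycle_def by auto
  have CyTE: "Cy \<subseteq> TE" using is_cycle_sub[OF cy] ET_TE by blast
  have inV: "\<And>a b. {a,b} \<in> Cy \<Longrightarrow> a \<in> set vs \<and> b \<in> set vs"
  proof -
    fix a b assume "{a,b} \<in> Cy" hence "{a,b} \<subseteq> set vs" using cycle_edges_sub[of "{a,b}" vs] vs(3) by simp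
    thus "a \<in> set vs \<and> b \<in> set vs" by simp
  qed
  have step: "\<And>i. 0 < i \<Longrightarrow> i+1 < length P \<Longrightarrow> P!i \<in> set vs \<Longrightarrow> {P!i, P!(i-1)} \<in> Cy \<and> {P!i, P!(i+1)} \<in> Cy"
  proof -
    fix i assume i: "0 < i" "i+1 < length P" "P!i \<in> set vs"
    obtain y z where yz: "y \<noteq> z" "y \<noteq> P!i" "z \<noteq> P!i" "{P!i,y} \<in> cycle_edges vs" "{P!i,z} \<in> cycle_edges vs"
      using cycle_nbrs[OF vs(1,2) i(3)] by blast
    have "y \<in> nbhd TE (P!i)" "z \<in> nbhd TE (P!i)" using yz CyTE vs(3) unfolding nbhd_def by auto
    hence "y \<in> {P!(i-1), P!(i+1)}" "z \<in> {P!(i-1), P!(i+1)}" using OP_D(5)[OF P i(1,2)] by simp_all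
    hence "P!(i-1) \<in> {y,z}" "P!(i+1) \<in> {y,z}" using yz(1) by auto
    thus "{P!i, P!(i-1)} \<in> Cy \<and> {P!i, P!(i+1)} \<in> Cy" using yz(4,5) vs(3) by auto
  qed
  have up: "\<And>m. j + m + 1 < length P \<Longrightarrow> {P!(j+m), P!(j+m+1)} \<in> Cy"
  proof -
    fix m show "j + m + 1 < length P \<Longrightarrow> {P!(j+m), P!(j+m+1)} \<in> Cy"
    proof (induction m)
      case 0 thus ?case using ej by simp
    next
      case (Suc m)
      have lt: "j + m + 1 < length P" using Suc.prems by simp
      have prev: "{P!(j+m), P!(j+m+1)} \<in> Cy" using Suc.IH[OF lt] .
      have v: "P!(j+m+1) \<in> set vs" using inV[OF prev] by (rule conjunct2)
      have a1: "0 < j+m+1" by simp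
      have a2: "j+m+1+1 < length P" using Suc.prems by simp
      have "{P!(j+m+1), P!(j+m+1+1)} \<in> Cy" using step[OF a1 a2 v] by (rule conjunct2)
      moreover have "j + Suc m = j+m+1" "j + Suc m + 1 = j+m+1+1" by simp_all
      ultimately show ?case by (simp only:)
    qed
  qed
  have down: "\<And>m. m \<le> j \<Longrightarrow> {P!(j-m), P!(j-m+1)} \<in> Cy"
  proof -
    fix m show "m \<le> j \<Longrightarrow> {P!(j-m), P!(j-m+1)} \<in> Cy"
    proof (induction m)
      case 0 thus ?case using ej by simp
    next
      case (Suc m)
      have le: "m \<le> j" using Suc.prems by simp
      have prev: "{P!(j-m), P!(j-m+1)} \<in> Cy" using Suc.IH[OF le] .
      have v: "P!(j-m) \<in> set vs" using inV[OF prev] by (rule conjunct1)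
      have a1: "0 < j - m" using Suc.prems by simp
      have a2: "j - m + 1 < length P" using Suc.prems j by simp
      have c: "{P!(j-m), P!(j-m-1)} \<in> Cy" using step[OF a1 a2 v] by (rule conjunct1)
      have e1: "j - Suc m = j - m - 1" by simp
      have e2: "j - m - 1 + 1 = j - m" using Suc.prems by simp
      have "{P!(j - Suc m), P!(j - Suc m + 1)} = {P!(j-m), P!(j-m-1)}" unfolding e1 e2 by blast
      thus ?case using c by (simp only:)
    qed
  qed
  show ?thesis
  proof
    fix e assume "e \<in> pedges P"
    then obtain i where i: "i + 1 < length P" "e = {P!i, P!(i+1)}" unfolding pedges_def by blast
    show "e \<in> Cy"
    proof (cases "j \<le> i")
      case True
      hence "j + (i - j) = i" by simp
      moreover have "j + (i - j) + 1 < length P" using True i by simp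
      ultimately have "{P!i, P!(i+1)} \<in> Cy" using up[of "i - j"] by (simp only:)
      thus ?thesis using i by simp
    next
      case False
      hence "j - (j - i) = i" "j - i \<le> j" by simp_all
      hence "{P!i, P!(i+1)} \<in> Cy" using down[of "j - i"] by (simp only:)
      thus ?thesis using i by simp
    qed
  qed
qed

lemma OP_rev_ne: assumes "P \<in> OP" shows "rev P \<noteq> P"
proof
  assume r: "rev P = P"
  note D = OP_D[OF assms]
  have "P \<noteq> []" using D(3) by auto
  hence "rev P ! 0 = P ! (length P - 1)" using rev_nth[of 0 P] by simp
  hence "P!0 = P!(length P - 1)" using r by simp
  moreover have "P!0 \<noteq> P!(length P - 1)" using D(1,3) by (intro dnth) auto
  ultimately show False by simp
qed

lemma pedges_ne: assumes "P \<in> OP" shows "{P!0, P!1} \<in> pedges P"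
  using pedgeI[of 0 P] OP_D(3)[OF assms] by simp

lemma cyc_four: assumes cy: "is_cycle VT ET Cy" shows "4 \<le> card {P \<in> OP. pedges P \<subseteq> Cy}"
proof -
  obtain vs where vs: "distinct vs" "length vs \<ge> 3" "Cy = cycle_edges vs"
    using cy unfolding is_cycle_def by auto
  obtain e where e: "e \<in> Cy" using is_cycle_ne[OF cy] by blast
  hence "e \<in> ET" using is_cycle_sub[OF cy] by blast
  then obtain P j where Pj: "P \<in> OP" "j + 1 < length P" "e = {P!j, P!(j+1)}" by (rule ET_D)
  have pP: "pedges P \<subseteq> Cy" using cyc_walk[OF cy Pj(1,2)] Pj(3) e by simp
  let ?A = "P!0"
  have "{?A, P!1} \<in> Cy" using pP pedges_ne[OF Pj(1)] by blast
  hence "{?A, P!1} \<subseteq> set vs" using cycle_edges_sub[of "{?A, P!1}" vs] vs(3) by simp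
  hence Avs: "?A \<in> set vs" by simp
  obtain y z where yz: "y \<noteq> z" "y \<noteq> ?A" "z \<noteq> ?A" "{?A,y} \<in> Cy" "{?A,z} \<in> Cy"
    using cycle_nbrs[OF vs(1,2) Avs] vs(3) by blast
  obtain w where w: "{?A,w} \<in> Cy" "w \<noteq> ?A" "w \<noteq> P!1"
  proof (cases "y = P!1")
    case True thus ?thesis using that yz by blast
  next
    case False thus ?thesis using that yz by blast
  qed
  have "{?A,w} \<in> ET" using w(1) is_cycle_sub[OF cy] by blast
  then obtain Q k where Qk: "Q \<in> OP" "k + 1 < length Q" "{?A,w} = {Q!k, Q!(k+1)}" by (rule ET_D)
  have pQ: "pedges Q \<subseteq> Cy" using cyc_walk[OF cy Qk(1,2)] Qk(3) w(1) by simp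
  have notP: "{?A,w} \<notin> pedges P"
  proof
    assume "{?A,w} \<in> pedges P"
    then obtain i where i: "i + 1 < length P" "{?A,w} = {P!i, P!(i+1)}" unfolding pedges_def by blast
    have d: "distinct P" using OP_D(1)[OF Pj(1)] .
    have "?A \<noteq> P!(i+1)" using d i by (intro dnth) auto
    hence "?A = P!i" using i(2) by (auto simp: doubleton_eq_iff)
    moreover have "0 < length P" "i < length P" using i(1) by linarith+
    ultimately have "i = 0" using nth_eq_iff_index_eq[OF d, of 0 i] by simp
    hence "w = P!1" using i(2) w(2) by (auto simp: doubleton_eq_iff)
    thus False using w(3) by simp
  qed
  have QP: "pedges Q \<noteq> pedges P" using notP Qk pedgeI[of k Q] by auto
  have m: "P \<in> {P \<in> OP. pedges P \<subseteq> Cy}" "rev P \<in> {P \<in> OP. pedges P \<subseteq> Cy}"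
          "Q \<in> {P \<in> OP. pedges P \<subseteq> Cy}" "rev Q \<in> {P \<in> OP. pedges P \<subseteq> Cy}"
    using Pj(1) Qk(1) OP_rev[OF Pj(1)] OP_rev[OF Qk(1)] pP pQ by (simp_all add: pedges_rev)
  have n1: "P \<noteq> rev P" using OP_rev_ne[OF Pj(1)] by simp
  have n2: "Q \<noteq> rev Q" using OP_rev_ne[OF Qk(1)] by simp
  have n3: "P \<noteq> Q" using QP by auto
  have n4: "P \<noteq> rev Q" using QP pedges_rev[of Q] by auto
  have n5: "rev P \<noteq> Q" using QP pedges_rev[of P] by auto
  have n6: "rev P \<noteq> rev Q" using QP by auto
  have c4: "card {P, rev P, Q, rev Q} = 4" using n1 n2 n3 n4 n5 n6 by simp
  have sub: "{P, rev P, Q, rev Q} \<subseteq> {P \<in> OP. pedges P \<subseteq> Cy}" using m by blast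
  have fin: "finite {P \<in> OP. pedges P \<subseteq> Cy}" using finOP by simp
  show ?thesis using card_mono[OF fin sub] c4 by simp
qed

end


context setting begin

lemma cyc_count: "4 * card {C. is_cycle VT ET C} \<le> card OP"
proof -
  let ?Cs = "{C. is_cycle VT ET C}"
  let ?PS = "\<lambda>C. {P \<in> OP. pedges P \<subseteq> C}"
  have finCs: "finite ?Cs" using cyc_finite[OF sgVT] .
  have finPS: "\<forall>C\<in>?Cs. finite (?PS C)" using finOP by simp
  have disj: "\<forall>C1\<in>?Cs. \<forall>C2\<in>?Cs. C1 \<noteq> C2 \<longrightarrow> ?PS C1 \<inter> ?PS C2 = {}"
  proof (intro ballI impI)
    fix C1 C2 assume c: "C1 \<in> ?Cs" "C2 \<in> ?Cs" "C1 \<noteq> C2"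
    have d: "C1 \<inter> C2 = {}" using cactus_like_disj[OF clVT] c by simp
    show "?PS C1 \<inter> ?PS C2 = {}"
    proof (rule ccontr)
      assume "?PS C1 \<inter> ?PS C2 \<noteq> {}"
      then obtain P where P: "P \<in> OP" "pedges P \<subseteq> C1" "pedges P \<subseteq> C2" by blast
      have "{P!0, P!1} \<in> C1 \<inter> C2" using pedges_ne[OF P(1)] P(2,3) by blast
      thus False using d by simp
    qed
  qed
  have "card (\<Union>C\<in>?Cs. ?PS C) = (\<Sum>C\<in>?Cs. card (?PS C))" using card_UN_disjoint[OF finCs finPS disj] .
  moreover have "of_nat (card ?Cs) * 4 \<le> (\<Sum>C\<in>?Cs. card (?PS C))"
    by (rule sum_bounded_below) (simp add: cyc_four)
  moreover have "card (\<Union>C\<in>?Cs. ?PS C) \<le> card OP" using finOP by (intro card_mono) auto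
  ultimately show ?thesis by simp
qed

lemma OP_0_Bg: assumes "P \<in> OP" shows "P!0 \<in> Bg"
proof -
  note D = OP_D[OF assms]
  have "0 < length P" using D(3) by linarith
  hence "P!0 \<in> set P" by (rule nth_mem)
  thus ?thesis using D(2,6) unfolding Bg_def by blast
qed

lemma OP_bound: "card OP \<le> 4 * card Bg"
proof (cases "OP = {}")
  case True thus ?thesis by simp
next
  case False
  then obtain P where P: "P \<in> OP" by blast
  have "VT \<noteq> {}" using OP_0_Bg[OF P] unfolding VT_def by blast
  from core[OF sgVT this] have c: "card ET + 1 \<le> card VT + card {C. is_cycle VT ET C}" .
  show ?thesis using c card_VT count_dir cyc_count by linarith
qed

lemma sgB: "simple_graph Bg BE"
  unfolding simple_graph_def
proof (intro conjI ballI)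
  show "finite Bg" using finite_subset[OF Bg_TV finTV] .
  fix e assume e: "e \<in> BE"
  hence "e \<in> TE" unfolding BE_def by simp
  then obtain A B where AB: "e = {A,B}" "A \<in> TV" "B \<in> TV" "A \<noteq> B" by (rule TE_D)
  have "A \<in> Bg" "B \<in> Bg" using e AB(1) unfolding BE_def by auto
  thus "\<exists>u v. e = {u, v} \<and> u \<noteq> v \<and> u \<in> Bg \<and> v \<in> Bg" using AB by (intro exI[of _ A] exI[of _ B]) simp
qed

lemma clB: "cactus_like Bg BE"
  by (rule cactus_like_mono[OF clT Bg_TV]) (auto simp: BE_def)

definition "CG = (\<lambda>P. the_elem (P!1)) ` OP"
definition "S = \<Union>Bg \<union> CG"

lemma OP_1: assumes "P \<in> OP" shows "P!1 = {the_elem (P!1)}" "P!1 \<in> TV"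
proof -
  note D = OP_D[OF assms]
  have "card (P!1) = 1" using D(8)[of 1] D(3) by simp
  then obtain x where "P!1 = {x}" by (rule card_1_singletonE)
  thus "P!1 = {the_elem (P!1)}" by simp
  have "1 < length P" using D(3) by linarith
  hence "P!1 \<in> set P" by (rule nth_mem)
  thus "P!1 \<in> TV" using D(2) by blast
qed

lemma OP_1_mem: assumes "P \<in> OP" "b \<in> P!1" shows "b = the_elem (P!1)" "b \<in> CG"
proof -
  show b: "b = the_elem (P!1)" using OP_1(1)[OF assms(1)] assms(2) by auto
  show "b \<in> CG" unfolding CG_def using b assms(1) by blast
qed

lemma OP_0_mem: assumes "P \<in> OP" "a \<in> P!0" shows "a \<in> \<Union>Bg" "witness_of F a = P!0"
proof -
  show "a \<in> \<Union>Bg" using OP_0_Bg[OF assms(1)] assms(2) by blast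
  show "witness_of F a = P!0" using TV_elem(4)[of "P!0" a] OP_0_Bg[OF assms(1)] assms(2) Bg_TV by blast
qed

lemma CG_notBg: assumes "b \<in> CG" shows "b \<notin> \<Union>Bg" "\<exists>P\<in>OP. P!1 = {b}"
proof -
  obtain P where P: "P \<in> OP" "b = the_elem (P!1)" using assms unfolding CG_def by blast
  hence P1: "P!1 = {b}" using OP_1(1)[OF P(1)] by simp
  thus "\<exists>P\<in>OP. P!1 = {b}" using P(1) by blast
  have "witness_of F b = {b}" using TV_elem(4)[of "P!1" b] OP_1(2)[OF P(1)] P1 by simp
  show "b \<notin> \<Union>Bg"
  proof
    assume "b \<in> \<Union>Bg"
    then obtain W where W: "W \<in> Bg" "b \<in> W" by blast
    hence "witness_of F b = W" using TV_elem(4) Bg_TV by blast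
    hence "W = {b}" using \<open>witness_of F b = {b}\<close> by simp
    thus False using W(1) unfolding Bg_def by simp
  qed
qed

lemma S_sub: "S \<subseteq> V"
proof
  fix v assume "v \<in> S"
  thus "v \<in> V"
  proof (cases "v \<in> \<Union>Bg")
    case True
    then obtain W where "W \<in> Bg" "v \<in> W" by blast
    thus ?thesis using TV_elem(1) Bg_TV by blast
  next
    case False
    hence "v \<in> CG" using \<open>v \<in> S\<close> unfolding S_def by simp
    then obtain P where "P \<in> OP" "P!1 = {v}" using CG_notBg(2) by blast
    thus ?thesis using OP_1(2) TV_elem(1) by blast
  qed
qed

lemma card_S: "card S \<le> 6 * card F"
proof -
  have "card S \<le> card (\<Union>Bg) + card CG" unfolding S_def by (rule card_Un_le)
  moreover have "card CG \<le> card OP" unfolding CG_def using finOP by (rule card_image_le)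
  ultimately show ?thesis using card_UBg OP_bound card_Bg by linarith
qed

end


context setting begin

lemma colour_exists:
  fixes col :: "'v set \<Rightarrow> nat"
  assumes "P \<in> OP" shows "\<exists>c. c \<in> {1,2,3::nat} \<and> c \<notin> col ` (nbhd TE (P!1) \<inter> Bg)"
proof -
  have nb: "nbhd TE (P!1) = {P!0, P!2}" using OP_D(5)[OF assms, of 1] OP_D(3)[OF assms] by (simp add: numeral_2_eq_2)
  let ?X = "nbhd TE (P!1) \<inter> Bg"
  have sub: "?X \<subseteq> {P!0, P!2}" using nb by blast
  have finX: "finite ?X" using finite_subset[OF sub] by simp
  have "card ?X \<le> card {P!0, P!2}" using card_mono[OF _ sub] by simp
  also have "\<dots> \<le> 2" by (rule card_insert_le_m1) simp_all
  finally have cX: "card ?X \<le> 2" .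
  have "card (col ` ?X) \<le> 2" using card_image_le[OF finX, of col] cX by linarith
  moreover have "{1,2,3::nat} \<subseteq> col ` ?X \<Longrightarrow> 3 \<le> card (col ` ?X)"
  proof -
    assume "{1,2,3::nat} \<subseteq> col ` ?X"
    hence "card {1,2,3::nat} \<le> card (col ` ?X)" using finX by (intro card_mono) auto
    thus ?thesis by simp
  qed
  ultimately have "\<not> {1,2,3::nat} \<subseteq> col ` ?X" by linarith
  thus ?thesis by blast
qed

lemma main:
  assumes k: "card F \<le> k"
  shows "measure_pmf.prob (pmf_of_set (PiE V (\<lambda>_. {1, 2, 3 :: nat}))) {f. compatible V E F f} \<ge> 1 / 3 ^ (6 * k)"
proof -
  obtain col where col: "\<forall>x\<in>Bg. col x \<in> {1,2,3::nat}" "\<forall>x y. {x,y} \<in> BE \<longrightarrow> col x \<noteq> col y"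
    using three_col[OF sgB clB] by blast
  define g where "g = (\<lambda>v. if v \<in> \<Union>Bg then col (witness_of F v)
     else (SOME c. c \<in> {1,2,3::nat} \<and> c \<notin> col ` (nbhd TE {v} \<inter> Bg)))"
  have gCG: "\<And>b. b \<in> CG \<Longrightarrow> g b \<in> {1,2,3} \<and> g b \<notin> col ` (nbhd TE {b} \<inter> Bg)"
  proof -
    fix b assume b: "b \<in> CG"
    obtain P where P: "P \<in> OP" "P!1 = {b}" using CG_notBg(2)[OF b] by blast
    have nb: "b \<notin> \<Union>Bg" using CG_notBg(1)[OF b] .
    have "\<exists>c. c \<in> {1,2,3::nat} \<and> c \<notin> col ` (nbhd TE {b} \<inter> Bg)"
      using colour_exists[OF P(1), of col] P(2) by simp
    hence "(SOME c. c \<in> {1,2,3::nat} \<and> c \<notin> col ` (nbhd TE {b} \<inter> Bg)) \<in> {1,2,3::nat} \<and>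
           (SOME c. c \<in> {1,2,3::nat} \<and> c \<notin> col ` (nbhd TE {b} \<inter> Bg)) \<notin> col ` (nbhd TE {b} \<inter> Bg)"
      by (rule someI_ex)
    thus "g b \<in> {1,2,3} \<and> g b \<notin> col ` (nbhd TE {b} \<inter> Bg)" unfolding g_def using nb by simp
  qed
  have gBg: "\<And>a. a \<in> \<Union>Bg \<Longrightarrow> g a = col (witness_of F a) \<and> witness_of F a \<in> Bg"
  proof -
    fix a assume a: "a \<in> \<Union>Bg"
    then obtain W where W: "W \<in> Bg" "a \<in> W" by blast
    hence "witness_of F a = W" using TV_elem(4) Bg_TV by blast
    thus "g a = col (witness_of F a) \<and> witness_of F a \<in> Bg" using a W unfolding g_def by simp
  qed
  have gS: "\<And>v. v \<in> S \<Longrightarrow> g v \<in> {1,2,3}"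
  proof -
    fix v assume v: "v \<in> S"
    show "g v \<in> {1,2,3}"
    proof (cases "v \<in> \<Union>Bg")
      case True thus ?thesis using gBg[OF True] col(1) by simp
    next
      case False hence "v \<in> CG" using v unfolding S_def by simp
      thus ?thesis using gCG by blast
    qed
  qed
  have key: "\<And>P a b. P \<in> OP \<Longrightarrow> a \<in> P!0 \<Longrightarrow> b \<in> P!1 \<Longrightarrow> g a \<noteq> g b"
  proof -
    fix P a b assume P: "P \<in> OP" and a: "a \<in> P!0" and b: "b \<in> P!1"
    have ga: "g a = col (P!0)" using gBg[OF OP_0_mem(1)[OF P a]] OP_0_mem(2)[OF P a] by simp
    have bCG: "b \<in> CG" using OP_1_mem(2)[OF P b] .
    have P1: "P!1 = {b}" using OP_1(1)[OF P] OP_1_mem(1)[OF P b] by simp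
    have "{P!0, P!(0+1)} \<in> TE" using OP_D(4)[OF P, of 0] OP_D(3)[OF P] by simp
    hence e: "{P!0, P!1} \<in> TE" by simp
    have "P!0 \<noteq> P!1" using OP_D(1,3)[OF P] by (intro dnth) auto
    hence "P!0 \<in> nbhd TE {b}" using e P1 unfolding nbhd_def by (simp add: insert_commute)
    hence "col (P!0) \<in> col ` (nbhd TE {b} \<inter> Bg)" using OP_0_Bg[OF P] by blast
    thus "g a \<noteq> g b" using gCG[OF bCG] ga by auto
  qed
  define \<Omega> where "\<Omega> = PiE V (\<lambda>_. {1,2,3::nat})"
  define A where "A = PiE V (\<lambda>v. if v \<in> S then {g v} else {1,2,3::nat})"
  have A\<Omega>: "A \<subseteq> \<Omega>"
  proof
    fix f assume f: "f \<in> A"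
    show "f \<in> \<Omega>" unfolding \<Omega>_def PiE_iff
    proof (intro conjI ballI)
      fix v assume v: "v \<in> V"
      have "f v \<in> (if v \<in> S then {g v} else {1,2,3::nat})" using f v unfolding A_def PiE_iff by blast
      thus "f v \<in> {1,2,3}" using gS[of v] by (cases "v \<in> S") auto
    next
      show "f \<in> extensional V" using f unfolding A_def PiE_iff by blast
    qed
  qed
  have fS: "\<And>f v. f \<in> A \<Longrightarrow> v \<in> S \<Longrightarrow> f v = g v"
  proof -
    fix f v assume f: "f \<in> A" and v: "v \<in> S"
    have "v \<in> V" using v S_sub by blast
    hence "f v \<in> (if v \<in> S then {g v} else {1,2,3::nat})" using f unfolding A_def PiE_iff by blast
    thus "f v = g v" using v by simp
  qed
  have Acomp: "A \<subseteq> {f. compatible V E F f}"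
  proof
    fix f assume fA: "f \<in> A"
    have c1: "\<forall>W\<in>TV. \<forall>a\<in>W. \<forall>b\<in>W. f a = f b"
    proof (intro ballI)
      fix W a b assume W: "W \<in> TV" and a: "a \<in> W" and b: "b \<in> W"
      show "f a = f b"
      proof (cases "card W \<ge> 2")
        case True
        hence WB: "W \<in> Bg" using W unfolding Bg_def by simp
        have aB: "a \<in> \<Union>Bg" and bB: "b \<in> \<Union>Bg" using WB a b by blast+
        hence "a \<in> S" "b \<in> S" unfolding S_def by blast+
        hence "f a = g a" "f b = g b" using fS[OF fA] by simp_all
        moreover have "witness_of F a = W" "witness_of F b = W" using TV_elem(4)[OF W] a b by simp_all
        ultimately show ?thesis using gBg[OF aB] gBg[OF bB] by simp
      next
        case False
        hence "card W \<le> Suc 0" by simp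
        hence "\<forall>a1\<in>W. \<forall>a2\<in>W. a1 = a2" using card_le_Suc0_iff_eq[OF TV_elem(2)[OF W]] by simp
        hence "a = b" using a b by blast
        thus ?thesis by simp
      qed
    qed
    have c2: "\<forall>A B. {A, B} \<in> TE \<and> A \<noteq> B \<and> card A \<ge> 2 \<and> card B \<ge> 2 \<longrightarrow> (\<forall>a\<in>A. \<forall>b\<in>B. f a \<noteq> f b)"
    proof (intro allI impI ballI)
      fix X Y a b assume h: "{X, Y} \<in> TE \<and> X \<noteq> Y \<and> card X \<ge> 2 \<and> card Y \<ge> 2" and a: "a \<in> X" and b: "b \<in> Y"
      have "X \<noteq> Y \<and> X \<in> TV \<and> Y \<in> TV" using simple_graph_edge[OF sgT, of X Y] h by simp
      hence XY: "X \<in> TV" "Y \<in> TV" by simp_all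
      hence XB: "X \<in> Bg" "Y \<in> Bg" using h unfolding Bg_def by simp_all
      hence "{X,Y} \<in> BE" using h unfolding BE_def by simp
      hence ne: "col X \<noteq> col Y" using col(2) by simp
      have aB: "a \<in> \<Union>Bg" and bB: "b \<in> \<Union>Bg" using XB a b by blast+
      hence "a \<in> S" "b \<in> S" unfolding S_def by blast+
      hence "f a = g a" "f b = g b" using fS[OF fA] by simp_all
      moreover have "witness_of F a = X" "witness_of F b = Y" using TV_elem(4)[OF XY(1) a] TV_elem(4)[OF XY(2) b] by simp_all
      ultimately show "f a \<noteq> f b" using gBg[OF aB] gBg[OF bB] ne by simp
    qed
    have c3: "\<forall>ps. cable_path TV TE ps \<and> length ps \<ge> 3 \<and> card (hd ps) \<ge> 2 \<and> card (last ps) \<ge> 2 \<and>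
          (\<forall>i. 0 < i \<and> i + 1 < length ps \<longrightarrow> card (ps ! i) = 1) \<longrightarrow>
          (\<forall>a\<in>hd ps. \<forall>b\<in>ps ! 1. f a \<noteq> f b) \<and>
          (\<forall>a\<in>last ps. \<forall>b\<in>ps ! (length ps - 2). f a \<noteq> f b)"
    proof (intro allI impI)
      fix ps assume h: "cable_path TV TE ps \<and> length ps \<ge> 3 \<and> card (hd ps) \<ge> 2 \<and> card (last ps) \<ge> 2 \<and>
          (\<forall>i. 0 < i \<and> i + 1 < length ps \<longrightarrow> card (ps ! i) = 1)"
      hence P: "ps \<in> OP" unfolding OP_def by blast
      have ne: "ps \<noteq> []" using OP_D(3)[OF P] by auto
      have gen: "\<And>Q a b. Q \<in> OP \<Longrightarrow> a \<in> Q!0 \<Longrightarrow> b \<in> Q!1 \<Longrightarrow> f a \<noteq> f b"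
      proof -
        fix Q a b assume Q: "Q \<in> OP" and a: "a \<in> Q!0" and b: "b \<in> Q!1"
        have "a \<in> S" using OP_0_mem(1)[OF Q a] unfolding S_def by blast
        moreover have "b \<in> S" using OP_1_mem(2)[OF Q b] unfolding S_def by blast
        ultimately have "f a = g a" "f b = g b" using fS[OF fA] by simp_all
        thus "f a \<noteq> f b" using key[OF Q a b] by simp
      qed
      show "(\<forall>a\<in>hd ps. \<forall>b\<in>ps ! 1. f a \<noteq> f b) \<and> (\<forall>a\<in>last ps. \<forall>b\<in>ps ! (length ps - 2). f a \<noteq> f b)"
      proof (intro conjI ballI)
        fix a b assume a: "a \<in> hd ps" and b: "b \<in> ps!1"
        have a0: "a \<in> ps!0" using a ne by (simp add: hd_conv_nth)
        show "f a \<noteq> f b" using gen[OF P a0 b] .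
      next
        fix a b assume a: "a \<in> last ps" and b: "b \<in> ps!(length ps - 2)"
        have R: "rev ps \<in> OP" using OP_rev[OF P] .
        have l: "0 < length ps" "1 < length ps" using OP_D(3)[OF P] by linarith+
        have "rev ps ! 0 = ps ! (length ps - 1)" using rev_nth[OF l(1)] by simp
        hence a0: "a \<in> rev ps ! 0" using a ne by (simp add: last_conv_nth)
        have "rev ps ! 1 = ps ! (length ps - 2)" using rev_nth[of 1 ps] l(2) by (simp add: numeral_2_eq_2)
        hence b1: "b \<in> rev ps ! 1" using b by simp
        show "f a \<noteq> f b" using gen[OF R a0 b1] .
      qed
    qed
    show "f \<in> {f. compatible V E F f}" unfolding compatible_def Let_def mem_Collect_eq
      by (intro conjI c1 c2 c3)
  qed
  have fin\<Omega>: "finite \<Omega>" unfolding \<Omega>_def using finV by (simp add: finite_PiE)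
  have ne\<Omega>: "\<Omega> \<noteq> {}" unfolding \<Omega>_def by (simp add: PiE_eq_empty_iff)
  have prob: "measure_pmf.prob (pmf_of_set \<Omega>) {f. compatible V E F f} = card (\<Omega> \<inter> {f. compatible V E F f}) / card \<Omega>"
    using measure_pmf_of_set[OF ne\<Omega> fin\<Omega>] .
  have c\<Omega>: "card \<Omega> = 3 ^ card V" unfolding \<Omega>_def using finV by (simp add: card_PiE numeral_3_eq_3)
  have sV: "card S \<le> card V" using card_mono[OF finV S_sub] .
  have cA: "card A = 3 ^ (card V - card S)"
  proof -
    have "card A = (\<Prod>v\<in>V. card (if v \<in> S then {g v} else {1,2,3::nat}))" unfolding A_def using finV by (simp add: card_PiE)
    also have "\<dots> = (\<Prod>v\<in>V. (if v \<in> S then 1 else 3::nat))" by (intro prod.cong) auto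
    also have "\<dots> = (\<Prod>v\<in>V \<inter> {v. v \<in> S}. 1) * (\<Prod>v\<in>V \<inter> - {v. v \<in> S}. 3)" using finV by (rule prod.If_cases)
    also have "\<dots> = 3 ^ card (V - S)" by (simp add: Diff_eq)
    also have "card (V - S) = card V - card S" using S_sub finV by (simp add: card_Diff_subset finite_subset)
    finally show ?thesis .
  qed
  have cle: "card A \<le> card (\<Omega> \<inter> {f. compatible V E F f})" using A\<Omega> Acomp fin\<Omega> by (intro card_mono) auto
  have "card S \<le> 6 * k" using card_S k by linarith
  hence "(3::real) ^ card S \<le> 3 ^ (6*k)" by (rule power_increasing) simp
  hence "1 / 3 ^ (6 * k) \<le> (1::real) / 3 ^ card S" by (intro divide_left_mono) simp_all
  also have "(1::real) / 3 ^ card S = real (card A) / real (card \<Omega>)"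
  proof -
    have "(3::real) ^ card V = 3 ^ (card V - card S) * 3 ^ card S"
      using sV by (simp add: power_add[symmetric])
    thus ?thesis using cA c\<Omega> by simp
  qed
  also have "\<dots> \<le> real (card (\<Omega> \<inter> {f. compatible V E F f})) / real (card \<Omega>)"
    using cle by (intro divide_right_mono) simp_all
  finally show ?thesis using prob unfolding \<Omega>_def by simp
qed

end


theorem lemma3p3:
  fixes V :: "'v set" and E F :: "'v set set" and k :: nat
  assumes "simple_graph V E"
    and "two_connected V E"
    and "F \<subseteq> E" and "card F \<le> k"
    and "cactus (witness_structure V F) (contract_edges V E F)"
  shows "measure_pmf.prob (pmf_of_set (PiE V (\<lambda>_. {1, 2, 3 :: nat})))
           {f. compatible V E F f} \<ge> 1 / 3 ^ (6 * k)"
proof -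
  have st: "setting V E F" unfolding setting_def using assms(1,3,5) by simp
  show ?thesis by (rule setting.main[OF st assms(4)])
qed

end
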